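(* Let $\Pi_C(P)=\min(\max(P,F),C)\,Q$ with $0<F\le C$, and let $$V_C(P)=E\left[\int_0^T \Pi_C(P_t)e^{-rt}\,dt+\int_T^\infty P_tQe^{-rt}\,dt\;\Big|\;P_0=P\right]$$ be the value of the project with a finite collar (sliding premium with cap and floor) contract of duration $T$. Then $$V_C(P)=V_{CP}(P)-S_C(P)+\frac{PQ}{r-\mu}e^{-(r-\mu)T},$$ where $$S_C(P)=E_1P^{\beta_1}\Phi(-d_{\beta_1}(P,F))+\frac{FQ}{r}e^{-rT}\Phi(-d_0(P,F))+G_1P^{\beta_1}\big(\Phi(d_{\beta_1}(P,F))-\Phi(d_{\beta_1}(P,C))\big)+G_2P^{\beta_2}\big(\Phi(d_{\beta_2}(P,F))-\Phi(d_{\beta_2}(P,C))\big)+\frac{PQ}{r-\mu}e^{-(r-\mu)T}\big(\Phi(d_1(P,F))-\Phi(d_1(P,C))\big)+H_2P^{\beta_2}\Phi(d_{\beta_2}(P,C))+\frac{CQ}{r}e^{-rT}\Phi(d_0(P,C)).$$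
   Context: The energy price $P=(P_t)_{t\ge0}$ solves $dP_t=\mu P_t\,dt+\sigma P_t\,dW_t$, $P_0=P>0$, under a risk-neutral measure, where $W$ is a standard Brownian motion, $\sigma>0$, and the interest rate $r$ satisfies $r>\mu$. $Q>0$ is the (constant) annual production and $T>0$ the contract duration. Let $\beta_{1,2}=\frac12-\frac{\mu}{\sigma^2}\pm\sqrt{\left(-\frac12+\frac{\mu}{\sigma^2}\right)^2+\frac{2r}{\sigma^2}}$ (so $\beta_1>1$, $\beta_2<0$). $\Phi$ is the standard normal distribution function and, for $\beta\in\{0,1,\beta_1,\beta_2\}$ and $X>0$, $d_\beta(P,X)=\dfrac{\ln(P/X)+(\mu+\sigma^2(\beta-\frac12))T}{\sigma\sqrt T}$. Constants: $E_1=\frac{(F^{1-\beta_1}-C^{1-\beta_1})Q}{\beta_1-\beta_2}\left(\frac{\beta_2}{r}-\frac{\beta_2-1}{r-\mu}\right)$, $G_1=-\frac{C^{1-\beta_1}Q}{\beta_1-\beta_2}\left(\frac{\beta_2}{r}-\frac{\beta_2-1}{r-\mu}\right)$, $G_2=\frac{F^{1-\beta_2}Q}{\beta_1-\beta_2}\left(\frac{\beta_1}{r}-\frac{\beta_1-1}{r-\mu}\right)$, $H_2=\frac{(F^{1-\beta_2}-C^{1-\beta_2})Q}{\beta_1-\beta_2}\left(\frac{\beta_1}{r}-\frac{\beta_1-1}{r-\mu}\right)$. $V_{CP}$ (the value of a perpetual collar contract) is $V_{CP}(P)=E_1P^{\beta_1}+\frac{FQ}{r}$ for $P<F$; $V_{CP}(P)=G_1P^{\beta_1}+G_2P^{\beta_2}+\frac{PQ}{r-\mu}$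 for $F\le P<C$; $V_{CP}(P)=H_2P^{\beta_2}+\frac{CQ}{r}$ for $P\ge C$. *)

theory Defs
  imports "HOL-Probability.Probability"
begin

definition Phi :: "real \<Rightarrow> real" where
  "Phi x = (LINT y:{..x}|lborel. std_normal_density y)"

definition std_brownian_motion :: "'a measure \<Rightarrow> (real \<Rightarrow> 'a \<Rightarrow> real) \<Rightarrow> bool" where
  "std_brownian_motion M W \<longleftrightarrow>
     prob_space M \<and>
     (\<forall>t\<ge>0. W t \<in> borel_measurable M) \<and>
     (\<forall>\<omega>\<in>space M. W 0 \<omega> = 0) \<and>
     (\<forall>\<omega>\<in>space M. continuous_on {0..} (\<lambda>t. W t \<omega>)) \<and>
     (\<forall>s t. 0 \<le> s \<and> s < t \<longrightarrow>
        distributed M lborel (\<lambda>\<omega>. W t \<omega> - W s \<omega>) (normal_density 0 (sqrt (t - s)))) \<and>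
     (\<forall>(ts :: nat \<Rightarrow> real) n. 0 \<le> ts 0 \<and> strict_mono ts \<longrightarrow>
        prob_space.indep_vars M (\<lambda>_. borel) (\<lambda>i \<omega>. W (ts (Suc i)) \<omega> - W (ts i) \<omega>) {..<n})"

text \<open>Geometric Brownian motion started at P: the (strong) solution of
  dP_t = mu P_t dt + sig P_t dW_t, P_0 = P.\<close>
definition gbm :: "real \<Rightarrow> real \<Rightarrow> real \<Rightarrow> (real \<Rightarrow> 'a \<Rightarrow> real) \<Rightarrow> real \<Rightarrow> 'a \<Rightarrow> real" where
  "gbm mu sig P W t \<omega> = P * exp ((mu - sig^2 / 2) * t + sig * W t \<omega>)"

definition beta1 :: "real \<Rightarrow> real \<Rightarrow> real \<Rightarrow> real" where
  "beta1 mu sig r = 1/2 - mu / sig^2 + sqrt ((-1/2 + mu / sig^2)^2 + 2 * r / sig^2)"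

definition beta2 :: "real \<Rightarrow> real \<Rightarrow> real \<Rightarrow> real" where
  "beta2 mu sig r = 1/2 - mu / sig^2 - sqrt ((-1/2 + mu / sig^2)^2 + 2 * r / sig^2)"

definition dbeta :: "real \<Rightarrow> real \<Rightarrow> real \<Rightarrow> real \<Rightarrow> real \<Rightarrow> real \<Rightarrow> real" where
  "dbeta mu sig T \<beta> P X = (ln (P / X) + (mu + sig^2 * (\<beta> - 1/2)) * T) / (sig * sqrt T)"

definition collar_payoff :: "real \<Rightarrow> real \<Rightarrow> real \<Rightarrow> real \<Rightarrow> real" where
  "collar_payoff F C Q P = min (max P F) C * Q"

definition V_C :: "'a measure \<Rightarrow> (real \<Rightarrow> 'a \<Rightarrow> real) \<Rightarrow> real \<Rightarrow> real \<Rightarrow> real \<Rightarrow> real \<Rightarrow> real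
    \<Rightarrow> real \<Rightarrow> real \<Rightarrow> real \<Rightarrow> real" where
  "V_C M W mu sig r Q T F C P =
     (\<integral>\<omega>. ((LINT t:{0..T}|lborel. collar_payoff F C Q (gbm mu sig P W t \<omega>) * exp (- r * t))
           + (LINT t:{T..}|lborel. gbm mu sig P W t \<omega> * Q * exp (- r * t))) \<partial>M)"

context
  fixes mu sig r Q F C :: real
begin

definition "b1 = beta1 mu sig r"
definition "b2 = beta2 mu sig r"

definition "E1 = (F powr (1 - b1) - C powr (1 - b1)) * Q / (b1 - b2) * (b2 / r - (b2 - 1) / (r - mu))"
definition "G1 = - (C powr (1 - b1)) * Q / (b1 - b2) * (b2 / r - (b2 - 1) / (r - mu))"
definition "G2 = F powr (1 - b2) * Q / (b1 - b2) * (b1 / r - (b1 - 1) / (r - mu))"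
definition "H2 = (F powr (1 - b2) - C powr (1 - b2)) * Q / (b1 - b2) * (b1 / r - (b1 - 1) / (r - mu))"

definition V_CP :: "real \<Rightarrow> real" where
  "V_CP P =
     (if P < F then E1 * P powr b1 + F * Q / r
      else if P < C then G1 * P powr b1 + G2 * P powr b2 + P * Q / (r - mu)
      else H2 * P powr b2 + C * Q / r)"

definition S_C :: "real \<Rightarrow> real \<Rightarrow> real" where
  "S_C T P =
     (let d = dbeta mu sig T in
      E1 * P powr b1 * Phi (- d b1 P F)
      + F * Q / r * exp (- r * T) * Phi (- d 0 P F)
      + G1 * P powr b1 * (Phi (d b1 P F) - Phi (d b1 P C))
      + G2 * P powr b2 * (Phi (d b2 P F) - Phi (d b2 P C))
      + P * Q / (r - mu) * exp (- (r - mu) * T) * (Phi (d 1 P F) - Phi (d 1 P C))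
      + H2 * P powr b2 * Phi (d b2 P C)
      + C * Q / r * exp (- r * T) * Phi (d 0 P C))"

end

end

theory Submission
  imports Defs
begin


lemma Phi_set_int: "set_integrable lborel A std_normal_density"
  if "A \<in> sets borel" for A
  unfolding set_integrable_def using that
  by (intro integrable_mult_indicator) auto

lemma Phi_nonneg: "0 \<le> Phi x"
  unfolding Phi_def set_lebesgue_integral_def
  by (intro integral_nonneg_AE) (auto simp: indicator_def)

lemma Phi_tail: "(LINT z:{c<..}|lborel. normal_density b 1 z) = Phi (b - c)"
proof -
  have "(LINT z:{c<..}|lborel. normal_density b 1 z)
      = (\<integral>z. indicator {c<..} z * normal_density b 1 z \<partial>lborel)"
    by (simp add: set_lebesgue_integral_def)
  also have "\<dots> = (\<integral>y. indicator {c<..} (b + (-1) * y) * normal_density b 1 (b + (-1) * y) \<partial>lborel)"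
    using lborel_integral_real_affine[of "-1" "\<lambda>z. indicator {c<..} z * normal_density b 1 z" b]
    by simp
  also have "\<dots> = (\<integral>y. indicator {..b - c} y * std_normal_density y \<partial>lborel)"
  proof (rule integral_cong_AE)
    show "AE y in lborel. indicator {c<..} (b + (-1) * y) * normal_density b 1 (b + (-1) * y)
        = indicator {..b - c} y * std_normal_density y"
      using AE_lborel_singleton[of "b - c"]
      by eventually_elim (auto simp: indicator_def normal_density_def power2_eq_square)
  qed auto
  also have "\<dots> = Phi (b - c)"
    by (simp add: Phi_def set_lebesgue_integral_def)
  finally show ?thesis .
qed

lemma Phi_plus_tail: "Phi x + (LINT z:{x<..}|lborel. std_normal_density z) = 1"
proof -
  have "Phi x + (LINT z:{x<..}|lborel. std_normal_density z)
       = (LINT z:{..x} \<union> {x<..}|lborel. std_normal_density z)"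
    unfolding Phi_def
    by (rule set_integral_Un[symmetric]) (auto intro: Phi_set_int)
  also have "{..x} \<union> {x<..} = (UNIV :: real set)" by auto
  also have "(LINT z:UNIV|lborel. std_normal_density z) = 1"
    by (simp add: set_lebesgue_integral_def)
  finally show ?thesis .
qed

lemma Phi_minus: "Phi (- x) = 1 - Phi x"
  using Phi_plus_tail[of x] Phi_tail[of x 0] by simp

lemma Phi_zero: "Phi 0 = 1/2"
  using Phi_minus[of 0] by simp

lemma Phi_split: "a \<le> x \<Longrightarrow> Phi x = Phi a + integral {a..x} std_normal_density"
proof -
  assume ax: "a \<le> x"
  have "Phi x = (LINT z:{..a} \<union> {a<..x}|lborel. std_normal_density z)"
    unfolding Phi_def using ax by (intro arg_cong[where f="\<lambda>A. set_lebesgue_integral lborel A _"]) auto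
  also have "\<dots> = Phi a + (LINT z:{a<..x}|lborel. std_normal_density z)"
    unfolding Phi_def by (rule set_integral_Un) (auto intro: Phi_set_int)
  also have "(LINT z:{a<..x}|lborel. std_normal_density z) = (LINT z:{a..x}|lborel. std_normal_density z)"
    unfolding set_lebesgue_integral_def
    using AE_lborel_singleton[of a]
    by (intro integral_cong_AE) (auto elim!: eventually_mono simp: indicator_def)
  also have "\<dots> = integral {a..x} std_normal_density"
    by (rule set_borel_integral_eq_integral) (auto intro: Phi_set_int)
  finally show ?thesis .
qed

lemma Phi_deriv: "(Phi has_real_derivative std_normal_density t) (at t)"
proof -
  let ?a = "t - 1" and ?b = "t + 1"
  have c: "continuous_on {?a..?b} std_normal_density"
    by (auto simp: normal_density_def intro!: continuous_intros)
  have "((\<lambda>x. integral {?a..x} std_normal_density) has_real_derivative std_normal_density t) (at t within {?a..?b})"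
    by (rule integral_has_real_derivative[OF c]) auto
  moreover have "at t within {?a..?b} = at t"
    by (rule at_within_interior) auto
  ultimately have "((\<lambda>x. Phi ?a + integral {?a..x} std_normal_density) has_real_derivative std_normal_density t) (at t)"
    by (auto intro!: derivative_eq_intros)
  then show ?thesis
    by (rule has_field_derivative_transform_within_open[where S="{?a<..<?b}"])
       (auto simp: Phi_split[symmetric])
qed

lemma Phi_cont[continuous_intros]: "isCont Phi x"
  using Phi_deriv DERIV_isCont by blast

lemma Phi_cont_comp[continuous_intros]: "continuous_on S f \<Longrightarrow> continuous_on S (\<lambda>x. Phi (f x))"
  using Phi_cont continuous_on_compose2[of UNIV Phi S f]
  by (auto intro: continuous_at_imp_continuous_on)

lemma Phi_cdf: "Phi x = cdf (density lborel std_normal_density) x"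
proof -
  have "cdf (density lborel std_normal_density) x = enn2real (\<integral>\<^sup>+ y. ennreal (std_normal_density y) * indicator {..x} y \<partial>lborel)"
    by (simp add: cdf_def measure_def emeasure_density)
  also have "\<dots> = enn2real (\<integral>\<^sup>+ y. ennreal (indicator {..x} y * std_normal_density y) \<partial>lborel)"
    by (intro arg_cong[where f=enn2real] nn_integral_cong) (auto simp: indicator_def)
  also have "\<dots> = Phi x"
    unfolding Phi_def set_lebesgue_integral_def
    by (subst integral_eq_nn_integral) auto
  finally show ?thesis by simp
qed

lemma real_distr_std: "real_distribution (density lborel std_normal_density)"
  unfolding real_distribution_def real_distribution_axioms_def
  using prob_space_normal_density by auto

lemma Phi_at_top: "(Phi \<longlongrightarrow> 1) at_top"
  using real_distribution.cdf_lim_at_top_prob[OF real_distr_std]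
  by (simp add: Phi_cdf[abs_def])

lemma Phi_at_bot: "(Phi \<longlongrightarrow> 0) at_bot"
  using finite_borel_measure.cdf_lim_at_bot[OF real_distribution.finite_borel_measure_M[OF real_distr_std]]
  by (simp add: Phi_cdf[abs_def])


lemma Phi_DERIV_comp[derivative_intros]:
  "(f has_real_derivative f') (at t) \<Longrightarrow> ((\<lambda>x. Phi (f x)) has_real_derivative std_normal_density (f t) * f') (at t)"
  using DERIV_chain2[OF Phi_deriv] by (simp add: mult.commute)

lemma std_normal_even: "std_normal_density (- x) = std_normal_density x"
  by (simp add: normal_density_def)

context
  fixes mu sig r :: real
  assumes sig: "sig > 0" and rpos: "r > 0"
begin

lemma beta_root:
  assumes "b = b1 mu sig r \<or> b = b2 mu sig r"
  shows "b * (mu - sig^2/2) + sig^2 * b^2 / 2 = r"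
proof -
  define k where "k = mu / sig^2 - 1/2"
  define D where "D = k^2 + 2 * r / sig^2"
  have D: "D \<ge> 0" unfolding D_def using sig rpos by (auto intro!: add_nonneg_nonneg)
  have sq: "(sqrt D)^2 = D" using D by simp
  have "b + k = sqrt D \<or> b + k = - sqrt D"
    using assms unfolding b1_def b2_def beta1_def beta2_def k_def D_def by (auto simp: algebra_simps)
  then have "(b + k)^2 = D" using sq by auto
  then have "b^2 + 2 * k * b = 2 * r / sig^2" unfolding D_def by (simp add: power2_eq_square algebra_simps)
  then have "sig^2 / 2 * (b^2 + 2 * k * b) = r" using sig by (simp add: field_simps)
  moreover have "sig^2 / 2 * (b^2 + 2 * k * b) = b * (mu - sig^2/2) + sig^2 * b^2 / 2"
    unfolding k_def using sig by (simp add: field_simps power2_eq_square)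
  ultimately show ?thesis by simp
qed

lemma b1_gt_b2: "b1 mu sig r - b2 mu sig r > 0"
proof -
  have "(-1/2 + mu / sig^2)^2 + 2 * r / sig^2 > 0"
    using sig rpos by (intro add_nonneg_pos) auto
  then show ?thesis unfolding b1_def b2_def beta1_def beta2_def by simp
qed

end

lemma phi_rel_gen:
  assumes sig: "sig > 0" and t: "t > 0" and P: "P > 0" and X: "X > 0"
  shows "P powr b * std_normal_density (dbeta mu sig t b P X)
       = X powr b * exp (- (b * (mu - sig^2/2) + sig^2 * b^2 / 2) * t) * std_normal_density (dbeta mu sig t 0 P X)"
proof -
  define u where "u = sqrt t"
  have u: "u > 0" "t = u^2" using t unfolding u_def by auto
  define L where "L = ln P - ln X"
  have dd: "dbeta mu sig t b P X = (L + (mu + sig^2 * (b - 1/2)) * t) / (sig * u)" for b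
    unfolding dbeta_def L_def u_def using P X by (simp add: ln_div)
  have key: "b * ln P - (dbeta mu sig t b P X)^2 / 2
      = b * ln X - (b * (mu - sig^2/2) + sig^2 * b^2 / 2) * t - (dbeta mu sig t 0 P X)^2 / 2"
    unfolding dd L_def using sig u
    by (simp add: u(2) field_simps power2_eq_square)
  have "P powr b * std_normal_density (dbeta mu sig t b P X)
      = exp (b * ln P - (dbeta mu sig t b P X)^2 / 2) / sqrt (2 * pi)"
    using P by (simp add: powr_def normal_density_def mult_exp_exp)
  also have "\<dots> = exp (b * ln X - (b * (mu - sig^2/2) + sig^2 * b^2 / 2) * t - (dbeta mu sig t 0 P X)^2 / 2) / sqrt (2 * pi)"
    by (simp only: key)
  also have "\<dots> = X powr b * exp (- (b * (mu - sig^2/2) + sig^2 * b^2 / 2) * t) * std_normal_density (dbeta mu sig t 0 P X)"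
    using X by (simp add: powr_def normal_density_def mult_exp_exp algebra_simps)
  finally show ?thesis .
qed

lemma dbeta_deriv:
  assumes sig: "sig > 0" and t: "t > 0"
  shows "((\<lambda>t. dbeta mu sig t b P X) has_real_derivative
     ((mu - sig^2/2) * t - ln (P / X)) / (2 * sig * t * sqrt t) + sig * b / (2 * sqrt t)) (at t)"
proof -
  have "((\<lambda>t. dbeta mu sig t b P X) has_real_derivative
     ((mu + sig^2 * (b - 1/2)) * (sig * sqrt t) - (ln (P / X) + (mu + sig^2 * (b - 1/2)) * t) * (inverse (sqrt t) * sig) / 2) / (sig * sqrt t * (sig * sqrt t))) (at t)"
    unfolding dbeta_def[abs_def] using sig t
    by (auto intro!: derivative_eq_intros)
  moreover have "((mu + sig^2 * (b - 1/2)) * (sig * sqrt t) - (ln (P / X) + (mu + sig^2 * (b - 1/2)) * t) * (inverse (sqrt t) * sig) / 2) / (sig * sqrt t * (sig * sqrt t))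
     = ((mu - sig^2/2) * t - ln (P / X)) / (2 * sig * t * sqrt t) + sig * b / (2 * sqrt t)"
  proof -
    define u where "u = sqrt t"
    have u: "u > 0" "t = u^2" using t unfolding u_def by auto
    show ?thesis unfolding u_def[symmetric] u(2) using u sig
      by (simp add: field_simps power2_eq_square)
  qed
  ultimately show ?thesis by simp
qed


definition qq :: "real \<Rightarrow> real \<Rightarrow> real \<Rightarrow> real \<Rightarrow> real \<Rightarrow> real" where
  "qq mu sig t P X = ((mu - sig^2/2) * t - ln (P / X)) / (2 * sig * t * sqrt t)"

definition hh :: "real \<Rightarrow> real \<Rightarrow> real" where
  "hh sig t = sig / (2 * sqrt t)"

lemma dbeta_deriv'[derivative_intros]:
  assumes "sig > 0" "t > 0"
  shows "((\<lambda>t. dbeta mu sig t b P X) has_real_derivative qq mu sig t P X + hh sig t * b) (at t)"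
  using dbeta_deriv[OF assms, of mu b P X] by (simp add: qq_def hh_def mult.commute)

lemma dbeta_deriv_eq:
  assumes "sig > 0" "t > 0" "D = qq mu sig t P X + hh sig t * b"
  shows "((\<lambda>t. dbeta mu sig t b P X) has_real_derivative D) (at t)"
  using dbeta_deriv'[OF assms(1,2)] assms(3) by simp

lemma Phi_DERIV_comp_eq:
  "(f has_real_derivative f') (at t) \<Longrightarrow> D = std_normal_density (f t) * f' \<Longrightarrow> ((\<lambda>x. Phi (f x)) has_real_derivative D) (at t)"
  using Phi_DERIV_comp by simp

lemma std_normal_sign: "s = 1 \<or> s = -1 \<Longrightarrow> std_normal_density (s * x) = std_normal_density x"
  using std_normal_even by auto

lemma term_pow:
  assumes sig: "sig > 0" and t: "t > 0" and P: "P > 0" and X: "X > 0"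
    and root: "b * (mu - sig^2/2) + sig^2 * b^2 / 2 = r" and s: "s = 1 \<or> s = -1"
  shows "((\<lambda>t. a * P powr b * Phi (s * dbeta mu sig t b P X)) has_real_derivative
     a * s * X powr b * exp (- r * t) * std_normal_density (dbeta mu sig t 0 P X) * (qq mu sig t P X + hh sig t * b)) (at t)"
proof -
  have "((\<lambda>t. a * P powr b * Phi (s * dbeta mu sig t b P X)) has_real_derivative
     a * P powr b * (std_normal_density (s * dbeta mu sig t b P X) * (s * (qq mu sig t P X + hh sig t * b)))) (at t)"
    using sig t by (auto intro!: derivative_eq_intros)
  moreover have "a * P powr b * (std_normal_density (s * dbeta mu sig t b P X) * (s * (qq mu sig t P X + hh sig t * b)))
     = a * s * (P powr b * std_normal_density (dbeta mu sig t b P X)) * (qq mu sig t P X + hh sig t * b)"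
    using std_normal_sign[OF s] by simp
  moreover have "P powr b * std_normal_density (dbeta mu sig t b P X) = X powr b * exp (- r * t) * std_normal_density (dbeta mu sig t 0 P X)"
    using phi_rel_gen[OF sig t P X, of b mu] root by simp
  ultimately show ?thesis by (metis (no_types, lifting) mult.assoc)
qed

lemma term_exp:
  assumes sig: "sig > 0" and t: "t > 0" and s: "s = 1 \<or> s = -1"
  shows "((\<lambda>t. a * exp (c * t) * Phi (s * dbeta mu sig t b P X)) has_real_derivative
     a * c * exp (c * t) * Phi (s * dbeta mu sig t b P X)
     + a * s * exp (c * t) * std_normal_density (dbeta mu sig t b P X) * (qq mu sig t P X + hh sig t * b)) (at t)"
proof -
  have "((\<lambda>t. a * exp (c * t) * Phi (s * dbeta mu sig t b P X)) has_real_derivative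
     a * (exp (c * t) * (c * 1)) * Phi (s * dbeta mu sig t b P X) + a * exp (c * t) * (std_normal_density (s * dbeta mu sig t b P X) * (s * (qq mu sig t P X + hh sig t * b)))) (at t)"
    using sig t by (auto intro!: derivative_eq_intros)
  then show ?thesis using std_normal_sign[OF s] by (simp add: algebra_simps)
qed

lemma vm_alg:
 fixes d A B F Q ua xa va ub xb r m ba bb :: real
 assumes d: "ba - bb \<noteq> 0" and r: "r \<noteq> 0" "r - m \<noteq> 0" and ua: "ua*xa = F" and ub: "ub*xb=F"
 defines "A \<equiv> bb/r - (bb-1)/(r-m)" and "B \<equiv> ba/r - (ba-1)/(r-m)"
 shows "(ua - va)*Q/(ba-bb)*A*xa + F*Q/r = (- va*Q/(ba-bb)*A)*xa + ub*Q/(ba-bb)*B*xb + F*Q/(r-m)"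
   and "ba*((ua - va)*Q/(ba-bb)*A*xa) = ba*((- va*Q/(ba-bb)*A)*xa) + bb*(ub*Q/(ba-bb)*B*xb) + F*Q/(r-m)"
proof -
  have e1: "(ua - va)*Q/(ba-bb)*A*xa - (- va*Q/(ba-bb)*A)*xa = F*Q*A/(ba-bb)"
  proof -
    have "(ua - va)*Q/(ba-bb)*A*xa - (- va*Q/(ba-bb)*A)*xa = (ua*xa)*Q*A/(ba-bb)"
      by (simp add: algebra_simps add_divide_distrib diff_divide_distrib)
    then show ?thesis using ua by simp
  qed
  have e2: "ub*Q/(ba-bb)*B*xb = F*Q*B/(ba-bb)" using ub[symmetric] d by (simp add: field_simps)
  have e3: "A - B = (ba-bb)*(1/(r-m) - 1/r)"
  proof -
    have "A - B = (bb - ba)/r - ((bb-1) - (ba-1))/(r-m)" unfolding A_def B_def by (simp add: diff_divide_distrib)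
    also have "\<dots> = (ba-bb)*(1/(r-m) - 1/r)" by (simp add: algebra_simps diff_divide_distrib)
    finally show ?thesis .
  qed
  have e4: "ba*A - bb*B = (ba-bb)/(r-m)"
  proof -
    have "ba*A = ba*bb/r - ba*(bb-1)/(r-m)" unfolding A_def by (simp add: right_diff_distrib)
    moreover have "bb*B = ba*bb/r - bb*(ba-1)/(r-m)" unfolding B_def by (simp add: right_diff_distrib)
    ultimately have "ba*A - bb*B = (bb*(ba-1) - ba*(bb-1))/(r-m)" by (simp add: diff_divide_distrib)
    also have "bb*(ba-1) - ba*(bb-1) = ba - bb" by (simp add: algebra_simps)
    finally show ?thesis .
  qed
  show "(ua - va)*Q/(ba-bb)*A*xa + F*Q/r = (- va*Q/(ba-bb)*A)*xa + ub*Q/(ba-bb)*B*xb + F*Q/(r-m)"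
  proof -
    have "F*Q*A/(ba-bb) - F*Q*B/(ba-bb) = F*Q*(A-B)/(ba-bb)" by (simp add: algebra_simps diff_divide_distrib)
    also have "\<dots> = F*Q*(1/(r-m) - 1/r)" using d e3 by simp
    also have "\<dots> = F*Q/(r-m) - F*Q/r" by (simp add: algebra_simps)
    finally show ?thesis using e1 e2 by linarith
  qed
  show "ba*((ua - va)*Q/(ba-bb)*A*xa) = ba*((- va*Q/(ba-bb)*A)*xa) + bb*(ub*Q/(ba-bb)*B*xb) + F*Q/(r-m)"
  proof -
    have "ba*(F*Q*A/(ba-bb)) - bb*(F*Q*B/(ba-bb)) = F*Q*(ba*A-bb*B)/(ba-bb)" by (simp add: algebra_simps diff_divide_distrib)
    also have "\<dots> = F*Q/(r-m)" using d e4 by simp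
    finally have "ba*(F*Q*A/(ba-bb)) - bb*(F*Q*B/(ba-bb)) = F*Q/(r-m)" .
    moreover have "ba*((ua - va)*Q/(ba-bb)*A*xa) - ba*((- va*Q/(ba-bb)*A)*xa) = ba*(F*Q*A/(ba-bb))"
      using e1 by (metis right_diff_distrib)
    moreover have "bb*(ub*Q/(ba-bb)*B*xb) = bb*(F*Q*B/(ba-bb))" using e2 by (rule arg_cong)
    ultimately show ?thesis by linarith
  qed
qed

lemma vc_alg:
 fixes d A B C Q va ya ub wb yb r m ba bb :: real
 assumes d: "ba - bb \<noteq> 0" and r: "r \<noteq> 0" "r - m \<noteq> 0" and va: "va*ya = C" and wb: "wb*yb=C"
 defines "A \<equiv> bb/r - (bb-1)/(r-m)" and "B \<equiv> ba/r - (ba-1)/(r-m)"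
 shows "(- va*Q/(ba-bb)*A)*ya + ub*Q/(ba-bb)*B*yb + C*Q/(r-m) = (ub - wb)*Q/(ba-bb)*B*yb + C*Q/r"
   and "ba*((- va*Q/(ba-bb)*A)*ya) + bb*(ub*Q/(ba-bb)*B*yb) + C*Q/(r-m) = bb*((ub - wb)*Q/(ba-bb)*B*yb)"
proof -
  have f1: "(- va*Q/(ba-bb)*A)*ya = - (C*Q*A/(ba-bb))"
  proof -
    have "(- va*Q/(ba-bb)*A)*ya = - ((va*ya)*Q*A/(ba-bb))" by (simp add: algebra_simps)
    then show ?thesis using va by simp
  qed
  have f2: "ub*Q/(ba-bb)*B*yb - (ub - wb)*Q/(ba-bb)*B*yb = C*Q*B/(ba-bb)"
  proof -
    have "ub*Q/(ba-bb)*B*yb - (ub - wb)*Q/(ba-bb)*B*yb = (wb*yb)*Q*B/(ba-bb)"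
      by (simp add: algebra_simps add_divide_distrib diff_divide_distrib)
    then show ?thesis using wb by simp
  qed
  have e3: "A - B = (ba-bb)*(1/(r-m) - 1/r)"
  proof -
    have "A - B = (bb - ba)/r - ((bb-1) - (ba-1))/(r-m)" unfolding A_def B_def by (simp add: diff_divide_distrib)
    also have "\<dots> = (ba-bb)*(1/(r-m) - 1/r)" by (simp add: algebra_simps diff_divide_distrib)
    finally show ?thesis .
  qed
  have e4: "ba*A - bb*B = (ba-bb)/(r-m)"
  proof -
    have "ba*A = ba*bb/r - ba*(bb-1)/(r-m)" unfolding A_def by (simp add: right_diff_distrib)
    moreover have "bb*B = ba*bb/r - bb*(ba-1)/(r-m)" unfolding B_def by (simp add: right_diff_distrib)
    ultimately have "ba*A - bb*B = (bb*(ba-1) - ba*(bb-1))/(r-m)" by (simp add: diff_divide_distrib)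
    also have "bb*(ba-1) - ba*(bb-1) = ba - bb" by (simp add: algebra_simps)
    finally show ?thesis .
  qed
  have "C*Q*A/(ba-bb) - C*Q*B/(ba-bb) = C*Q*(A-B)/(ba-bb)" by (simp add: algebra_simps diff_divide_distrib)
  also have "\<dots> = C*Q*(1/(r-m) - 1/r)" using d e3 by simp
  also have "\<dots> = C*Q/(r-m) - C*Q/r" by (simp add: algebra_simps)
  finally show "(- va*Q/(ba-bb)*A)*ya + ub*Q/(ba-bb)*B*yb + C*Q/(r-m) = (ub - wb)*Q/(ba-bb)*B*yb + C*Q/r"
    using f1 f2 by linarith
  have "ba*(C*Q*A/(ba-bb)) - bb*(C*Q*B/(ba-bb)) = C*Q*(ba*A-bb*B)/(ba-bb)" by (simp add: algebra_simps diff_divide_distrib)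
  also have "\<dots> = C*Q/(r-m)" using d e4 by simp
  finally have g: "ba*(C*Q*A/(ba-bb)) - bb*(C*Q*B/(ba-bb)) = C*Q/(r-m)" .
  have g1: "ba*((- va*Q/(ba-bb)*A)*ya) = - (ba*(C*Q*A/(ba-bb)))" by (simp only: f1 mult_minus_right)
  have g2: "bb*(ub*Q/(ba-bb)*B*yb) - bb*((ub - wb)*Q/(ba-bb)*B*yb) = bb*(C*Q*B/(ba-bb))"
    using f2 by (metis right_diff_distrib)
  show "ba*((- va*Q/(ba-bb)*A)*ya) + bb*(ub*Q/(ba-bb)*B*yb) + C*Q/(r-m) = bb*((ub - wb)*Q/(ba-bb)*B*yb)"
    using g g1 g2 by linarith
qed

context
  fixes mu sig r Q F C :: real
  assumes sig: "sig > 0" and rmu: "r > mu" and rpos: "r > 0" and F: "F > 0" and FC: "F \<le> C"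
begin

abbreviation "B1 \<equiv> b1 mu sig r"
abbreviation "B2 \<equiv> b2 mu sig r"

lemma powr_one_minus: "(X::real) > 0 \<Longrightarrow> X powr (1 - b) = X / X powr b"
  using powr_diff[of X 1 b] by simp

lemma C_pos: "C > 0" using F FC by simp

lemma powr_cancel: "X > 0 \<Longrightarrow> X powr (1 - b) * X powr b = (X::real)"
  by (simp add: powr_add[symmetric])

lemma ident_F:
  "E1 mu sig r Q F C * F powr B1 + F * Q / r = G1 mu sig r Q C * F powr B1 + G2 mu sig r Q F * F powr B2 + F * Q / (r - mu)"
  "B1 * (E1 mu sig r Q F C * F powr B1) = B1 * (G1 mu sig r Q C * F powr B1) + B2 * (G2 mu sig r Q F * F powr B2) + F * Q / (r - mu)"
proof -
  have d: "B1 - B2 \<noteq> 0" using b1_gt_b2[OF sig rpos, where mu=mu] by simp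
  have r: "r \<noteq> 0" "r - mu \<noteq> 0" using rpos rmu by auto
  note v = vm_alg[where ua="F powr (1-B1)" and xa="F powr B1" and va="C powr (1-B1)" and ub="F powr (1-B2)" and xb="F powr B2" and Q=Q and F=F and r=r and m=mu and ba=B1 and bb=B2, OF d r powr_cancel[OF F] powr_cancel[OF F]]
  show "E1 mu sig r Q F C * F powr B1 + F * Q / r = G1 mu sig r Q C * F powr B1 + G2 mu sig r Q F * F powr B2 + F * Q / (r - mu)"
    unfolding E1_def G1_def G2_def using v(1) by simp
  show "B1 * (E1 mu sig r Q F C * F powr B1) = B1 * (G1 mu sig r Q C * F powr B1) + B2 * (G2 mu sig r Q F * F powr B2) + F * Q / (r - mu)"
    unfolding E1_def G1_def G2_def using v(2) by simp
qed

lemma ident_C: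
  "G1 mu sig r Q C * C powr B1 + G2 mu sig r Q F * C powr B2 + C * Q / (r - mu) = H2 mu sig r Q F C * C powr B2 + C * Q / r"
  "B1 * (G1 mu sig r Q C * C powr B1) + B2 * (G2 mu sig r Q F * C powr B2) + C * Q / (r - mu) = B2 * (H2 mu sig r Q F C * C powr B2)"
proof -
  have d: "B1 - B2 \<noteq> 0" using b1_gt_b2[OF sig rpos, where mu=mu] by simp
  have r: "r \<noteq> 0" "r - mu \<noteq> 0" using rpos rmu by auto
  note v = vc_alg[where va="C powr (1-B1)" and ya="C powr B1" and wb="C powr (1-B2)" and ub="F powr (1-B2)" and yb="C powr B2" and Q=Q and C=C and r=r and m=mu and ba=B1 and bb=B2, OF d r powr_cancel[OF C_pos] powr_cancel[OF C_pos]]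
  show "G1 mu sig r Q C * C powr B1 + G2 mu sig r Q F * C powr B2 + C * Q / (r - mu) = H2 mu sig r Q F C * C powr B2 + C * Q / r"
    unfolding H2_def G1_def G2_def using v(1) by simp
  show "B1 * (G1 mu sig r Q C * C powr B1) + B2 * (G2 mu sig r Q F * C powr B2) + C * Q / (r - mu) = B2 * (H2 mu sig r Q F C * C powr B2)"
    unfolding H2_def G1_def G2_def using v(2) by simp
qed

end


lemma final_alg:
  fixes e pF pC qF qC h xa xb ya yb Ee Ga Gb Hh Ba Bb aa ab ca cb FQ CQ PQe PhA PhaF PhaC PhzC :: real
  assumes "Ee*xa + aa = Ga*xa + Gb*xb + ab" "Ba*(Ee*xa) = Ba*(Ga*xa) + Bb*(Gb*xb) + ab"
    "Ga*ya + Gb*yb + cb = Hh*yb + ca" "Ba*(Ga*ya) + Bb*(Gb*yb) + cb = Bb*(Hh*yb)"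
  shows "Ee*(-1)*xa*e*pF*(qF + h*Ba)
    + (- (FQ*e*PhA) + aa*(-1)*e*pF*(qF + h*0))
    + Ga*1*xa*e*pF*(qF+h*Ba) + (-Ga)*1*ya*e*pC*(qC+h*Ba)
    + Gb*1*xb*e*pF*(qF+h*Bb) + (-Gb)*1*yb*e*pC*(qC+h*Bb)
    + (- (PQe*PhaF) + ab*e*pF*(qF+h*1))
    + (PQe*PhaC - cb*e*pC*(qC+h*1))
    + Hh*1*yb*e*pC*(qC+h*Bb)
    + (- (CQ*e*PhzC) + ca*1*e*pC*(qC+h*0))
    = - (e*FQ*PhA + PQe*(PhaF - PhaC) + e*CQ*PhzC)"
  using assms by algebra

definition Kf :: "real \<Rightarrow> real \<Rightarrow> real \<Rightarrow> real \<Rightarrow> real \<Rightarrow> real \<Rightarrow> real \<Rightarrow> real \<Rightarrow> real" where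
  "Kf mu sig r Q F C P t = exp (- r * t) * (F * Q * Phi (- dbeta mu sig t 0 P F)
     + P * Q * exp (mu * t) * (Phi (dbeta mu sig t 1 P F) - Phi (dbeta mu sig t 1 P C))
     + C * Q * Phi (dbeta mu sig t 0 P C))"

context
  fixes mu sig r Q F C P :: real
  assumes sig: "sig > 0" and rmu: "r > mu" and rpos: "r > 0" and F: "F > 0" and FC: "F \<le> C" and P: "P > 0"
begin

lemma Cp: "C > 0" using F FC by simp

lemma S_deriv:
  assumes t: "t > 0"
  shows "((\<lambda>t. S_C mu sig r Q F C t P) has_real_derivative - Kf mu sig r Q F C P t) (at t)"
proof -
  define B1 where "B1 = b1 mu sig r"
  define B2 where "B2 = b2 mu sig r"
  define E where "E = E1 mu sig r Q F C"
  define G1' where "G1' = G1 mu sig r Q C"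
  define G2' where "G2' = G2 mu sig r Q F"
  define H where "H = H2 mu sig r Q F C"
  define e where "e = exp (- r * t)"
  define pF where "pF = std_normal_density (dbeta mu sig t 0 P F)"
  define pC where "pC = std_normal_density (dbeta mu sig t 0 P C)"
  define qF where "qF = qq mu sig t P F"
  define qC where "qC = qq mu sig t P C"
  define h where "h = hh sig t"
  define PQe where "PQe = P * Q * exp (- (r - mu) * t)"
  have root1: "B1 * (mu - sig^2/2) + sig^2 * B1^2 / 2 = r" unfolding B1_def by (rule beta_root[OF sig rpos]) simp
  have root2: "B2 * (mu - sig^2/2) + sig^2 * B2^2 / 2 = r" unfolding B2_def by (rule beta_root[OF sig rpos]) simp
  have r0: "r \<noteq> 0" "r - mu \<noteq> 0" using rpos rmu by auto
  have rel1: "P * std_normal_density (dbeta mu sig t 1 P X) = X * exp (- mu * t) * std_normal_density (dbeta mu sig t 0 P X)"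
    if "X > 0" for X
    using phi_rel_gen[OF sig t P that, of 1 mu] P that by (simp add: power2_eq_square)
  have ee: "exp (- (r - mu) * t) * exp (- mu * t) = e" unfolding e_def by (simp add: mult_exp_exp algebra_simps)
  have Seq: "(\<lambda>t. S_C mu sig r Q F C t P) = (\<lambda>t.
      E * P powr B1 * Phi ((-1) * dbeta mu sig t B1 P F)
    + (F*Q/r) * exp ((-r) * t) * Phi ((-1) * dbeta mu sig t 0 P F)
    + G1' * P powr B1 * Phi (1 * dbeta mu sig t B1 P F) + (-G1') * P powr B1 * Phi (1 * dbeta mu sig t B1 P C)
    + G2' * P powr B2 * Phi (1 * dbeta mu sig t B2 P F) + (-G2') * P powr B2 * Phi (1 * dbeta mu sig t B2 P C)
    + (P*Q/(r-mu)) * exp ((-(r-mu)) * t) * Phi (1 * dbeta mu sig t 1 P F)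
    + (-(P*Q/(r-mu))) * exp ((-(r-mu)) * t) * Phi (1 * dbeta mu sig t 1 P C)
    + H * P powr B2 * Phi (1 * dbeta mu sig t B2 P C)
    + (C*Q/r) * exp ((-r) * t) * Phi (1 * dbeta mu sig t 0 P C))"
    unfolding B1_def B2_def E_def G1'_def G2'_def H_def
    by (auto simp: S_C_def Let_def algebra_simps fun_eq_iff diff_divide_distrib)
  have d1: "((\<lambda>t. E * P powr B1 * Phi ((-1) * dbeta mu sig t B1 P F)) has_real_derivative
       E*(-1)*(F powr B1)*e*pF*(qF + h*B1)) (at t)"
    using term_pow[OF sig t P F root1, of "-1" E] unfolding e_def pF_def qF_def h_def by simp
  have d2: "((\<lambda>t. (F*Q/r) * exp ((-r) * t) * Phi ((-1) * dbeta mu sig t 0 P F)) has_real_derivative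
       (- ((F*Q)*e*Phi (- dbeta mu sig t 0 P F)) + (F*Q/r)*(-1)*e*pF*(qF + h*0))) (at t)"
    using term_exp[OF sig t, of "-1" "F*Q/r" "-r" mu 0 P F] r0 unfolding e_def pF_def qF_def h_def by simp
  have d3: "((\<lambda>t. G1' * P powr B1 * Phi (1 * dbeta mu sig t B1 P F)) has_real_derivative
       G1'*1*(F powr B1)*e*pF*(qF + h*B1)) (at t)"
    using term_pow[OF sig t P F root1, of 1 G1'] unfolding e_def pF_def qF_def h_def by simp
  have d4: "((\<lambda>t. (-G1') * P powr B1 * Phi (1 * dbeta mu sig t B1 P C)) has_real_derivative
       (-G1')*1*(C powr B1)*e*pC*(qC + h*B1)) (at t)"
    using term_pow[OF sig t P Cp root1, of 1 "-G1'"] unfolding e_def pC_def qC_def h_def by simp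
  have d5: "((\<lambda>t. G2' * P powr B2 * Phi (1 * dbeta mu sig t B2 P F)) has_real_derivative
       G2'*1*(F powr B2)*e*pF*(qF + h*B2)) (at t)"
    using term_pow[OF sig t P F root2, of 1 G2'] unfolding e_def pF_def qF_def h_def by simp
  have d6: "((\<lambda>t. (-G2') * P powr B2 * Phi (1 * dbeta mu sig t B2 P C)) has_real_derivative
       (-G2')*1*(C powr B2)*e*pC*(qC + h*B2)) (at t)"
    using term_pow[OF sig t P Cp root2, of 1 "-G2'"] unfolding e_def pC_def qC_def h_def by simp
  have d7: "((\<lambda>t. (P*Q/(r-mu)) * exp ((-(r-mu)) * t) * Phi (1 * dbeta mu sig t 1 P F)) has_real_derivative
       (- (PQe * Phi (dbeta mu sig t 1 P F)) + (F*Q/(r-mu))*e*pF*(qF + h*1))) (at t)"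
  proof -
    have "(P*Q/(r-mu)) * 1 * exp ((-(r-mu)) * t) * std_normal_density (dbeta mu sig t 1 P F)
        = (Q/(r-mu)) * (exp (- (r - mu) * t) * (P * std_normal_density (dbeta mu sig t 1 P F)))" by simp
    also have "\<dots> = (F*Q/(r-mu))*e*pF" unfolding rel1[OF F] pF_def using ee
      by (simp add: algebra_simps)
    finally have x: "(P*Q/(r-mu)) * 1 * exp ((-(r-mu)) * t) * std_normal_density (dbeta mu sig t 1 P F) = (F*Q/(r-mu))*e*pF" .
    have pq: "P*Q/(r-mu) * - (r-mu) = -(P*Q)" using r0 by (simp add: field_simps)
    have p1: "P*Q/(r-mu) * - (r-mu) * exp (- (r - mu) * t) * Phi (1 * dbeta mu sig t 1 P F) = - (PQe * Phi (dbeta mu sig t 1 P F))"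
      unfolding pq PQe_def by simp
    show ?thesis
      apply (rule DERIV_cong[OF term_exp[OF sig t, of 1 "P*Q/(r-mu)" "-(r-mu)" mu 1 P F]])
       apply simp
      unfolding qF_def[symmetric] h_def[symmetric]
      by (simp only: x p1)
  qed
  have d8: "((\<lambda>t. (-(P*Q/(r-mu))) * exp ((-(r-mu)) * t) * Phi (1 * dbeta mu sig t 1 P C)) has_real_derivative
       (PQe * Phi (dbeta mu sig t 1 P C) - (C*Q/(r-mu))*e*pC*(qC + h*1))) (at t)"
  proof -
    have "(P*Q/(r-mu)) * 1 * exp ((-(r-mu)) * t) * std_normal_density (dbeta mu sig t 1 P C)
        = (Q/(r-mu)) * (exp (- (r - mu) * t) * (P * std_normal_density (dbeta mu sig t 1 P C)))" by simp
    also have "\<dots> = (C*Q/(r-mu))*e*pC" unfolding rel1[OF Cp] pC_def using ee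
      by (simp add: algebra_simps)
    finally have x: "(P*Q/(r-mu)) * 1 * exp ((-(r-mu)) * t) * std_normal_density (dbeta mu sig t 1 P C) = (C*Q/(r-mu))*e*pC" .
    have xn: "-(P*Q/(r-mu)) * 1 * exp ((-(r-mu)) * t) * std_normal_density (dbeta mu sig t 1 P C) = -((C*Q/(r-mu))*e*pC)"
      using x by simp
    have pq: "-(P*Q/(r-mu)) * - (r-mu) = (P*Q)" using r0 by (simp add: field_simps)
    have p1: "-(P*Q/(r-mu)) * - (r-mu) * exp (- (r - mu) * t) * Phi (1 * dbeta mu sig t 1 P C) = PQe * Phi (dbeta mu sig t 1 P C)"
      unfolding pq PQe_def by simp
    show ?thesis
      apply (rule DERIV_cong[OF term_exp[OF sig t, of 1 "-(P*Q/(r-mu))" "-(r-mu)" mu 1 P C]])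
       apply simp
      unfolding qC_def[symmetric] h_def[symmetric]
      by (simp only: xn p1) simp
  qed
  have d9: "((\<lambda>t. H * P powr B2 * Phi (1 * dbeta mu sig t B2 P C)) has_real_derivative
       H*1*(C powr B2)*e*pC*(qC + h*B2)) (at t)"
    using term_pow[OF sig t P Cp root2, of 1 H] unfolding e_def pC_def qC_def h_def by simp
  have d10: "((\<lambda>t. (C*Q/r) * exp ((-r) * t) * Phi (1 * dbeta mu sig t 0 P C)) has_real_derivative
       (- ((C*Q)*e*Phi (dbeta mu sig t 0 P C)) + (C*Q/r)*1*e*pC*(qC + h*0))) (at t)"
    using term_exp[OF sig t, of 1 "C*Q/r" "-r" mu 0 P C] r0 unfolding e_def pC_def qC_def h_def by simp
  have tot: "((\<lambda>t. S_C mu sig r Q F C t P) has_real_derivative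
      E*(-1)*(F powr B1)*e*pF*(qF + h*B1)
    + (- ((F*Q)*e*Phi (- dbeta mu sig t 0 P F)) + (F*Q/r)*(-1)*e*pF*(qF + h*0))
    + G1'*1*(F powr B1)*e*pF*(qF + h*B1) + (-G1')*1*(C powr B1)*e*pC*(qC + h*B1)
    + G2'*1*(F powr B2)*e*pF*(qF + h*B2) + (-G2')*1*(C powr B2)*e*pC*(qC + h*B2)
    + (- (PQe * Phi (dbeta mu sig t 1 P F)) + (F*Q/(r-mu))*e*pF*(qF + h*1))
    + (PQe * Phi (dbeta mu sig t 1 P C) - (C*Q/(r-mu))*e*pC*(qC + h*1))
    + H*1*(C powr B2)*e*pC*(qC + h*B2)
    + (- ((C*Q)*e*Phi (dbeta mu sig t 0 P C)) + (C*Q/r)*1*e*pC*(qC + h*0))) (at t)"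
    unfolding Seq by (rule DERIV_add d1 d2 d3 d4 d5 d6 d7 d8 d9 d10)+
  have iF: "E * F powr B1 + F * Q / r = G1' * F powr B1 + G2' * F powr B2 + F * Q / (r - mu)"
           "B1 * (E * F powr B1) = B1 * (G1' * F powr B1) + B2 * (G2' * F powr B2) + F * Q / (r - mu)"
    unfolding E_def G1'_def G2'_def B1_def B2_def using ident_F[OF sig rmu rpos F FC] by auto
  have iC: "G1' * C powr B1 + G2' * C powr B2 + C * Q / (r - mu) = H * C powr B2 + C * Q / r"
           "B1 * (G1' * C powr B1) + B2 * (G2' * C powr B2) + C * Q / (r - mu) = B2 * (H * C powr B2)"
    unfolding H_def G1'_def G2'_def B1_def B2_def using ident_C[OF sig rmu rpos F FC] by auto
  note fa = final_alg[OF iF iC, where e=e and pF=pF and pC=pC and qF=qF and qC=qC and h=h and FQ="F*Q" and CQ="C*Q"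
     and PQe=PQe and PhA="Phi (- dbeta mu sig t 0 P F)" and PhaF="Phi (dbeta mu sig t 1 P F)" and PhaC="Phi (dbeta mu sig t 1 P C)"
     and PhzC="Phi (dbeta mu sig t 0 P C)"]
  have PQe': "PQe = P * Q * exp (mu * t) * e" unfolding PQe_def e_def by (simp add: mult_exp_exp algebra_simps)
  have K: "- (e*(F*Q)*Phi (- dbeta mu sig t 0 P F) + PQe*(Phi (dbeta mu sig t 1 P F) - Phi (dbeta mu sig t 1 P C)) + e*(C*Q)*Phi (dbeta mu sig t 0 P C))
     = - Kf mu sig r Q F C P t"
    unfolding Kf_def PQe' e_def by (simp add: algebra_simps)
  show ?thesis using DERIV_cong[OF tot fa] K by simp
qed

end


lemma sqrt_right0: "((\<lambda>t. sqrt t) \<longlongrightarrow> 0) (at_right (0::real))"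
  using tendsto_real_sqrt[OF tendsto_ident_at[of "0::real" "{0<..}"]] by simp

lemma d_top:
  fixes L c s :: real
  assumes L: "L > 0" and s: "s > 0"
  shows "filterlim (\<lambda>t. (L + c*t)/(s * sqrt t)) at_top (at_right 0)"
proof -
  have t1: "((\<lambda>t. s * sqrt t / L) \<longlongrightarrow> 0) (at_right 0)"
    using tendsto_divide[OF tendsto_mult[OF tendsto_const[of s] sqrt_right0] tendsto_const[of L]] L by simp
  have "\<forall>\<^sub>F t in at_right 0. 0 < s * sqrt t / L"
    using eventually_at_right_less[of "0::real"] by eventually_elim (use L s in auto)
  then have g: "filterlim (\<lambda>t. s * sqrt t / L) (at_right 0) (at_right 0)"
    by (rule tendsto_imp_filterlim_at_right[OF t1])
  have i: "filterlim (\<lambda>t. inverse (s * sqrt t / L)) at_top (at_right 0)"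
    by (rule filterlim_compose[OF filterlim_inverse_at_top_right g])
  have t2: "((\<lambda>t. (c/s) * sqrt t) \<longlongrightarrow> 0) (at_right 0)"
    using tendsto_mult[OF tendsto_const[of "c/s"] sqrt_right0] by simp
  have f: "filterlim (\<lambda>t. (c/s) * sqrt t + inverse (s * sqrt t / L)) at_top (at_right 0)"
    by (rule filterlim_tendsto_add_at_top[OF t2 i])
  show ?thesis
  proof (rule filterlim_cong[THEN iffD1, OF refl refl _ f])
    show "\<forall>\<^sub>F x in at_right 0. c / s * sqrt x + inverse (s * sqrt x / L) = (L + c * x) / (s * sqrt x)"
      using eventually_at_right_less[of "0::real"]
    proof eventually_elim
      case (elim x)
      have "x = sqrt x * sqrt x" using elim by simp
      then show ?case using elim s L by (simp add: field_simps)
    qed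
  qed
qed

lemma d_bot:
  fixes L c s :: real
  assumes L: "L < 0" and s: "s > 0"
  shows "filterlim (\<lambda>t. (L + c*t)/(s * sqrt t)) at_bot (at_right 0)"
proof -
  have "filterlim (\<lambda>t. ((-L) + (-c)*t)/(s * sqrt t)) at_top (at_right 0)"
    using d_top[of "-L" s "-c"] L s by simp
  then have "filterlim (\<lambda>t. - (((-L) + (-c)*t)/(s * sqrt t))) at_bot (at_right 0)"
    by (rule filterlim_uminus_at_top[THEN iffD1])
  moreover have "- (((-L) + (-c)*t)/(s * sqrt t)) = (L + c*t)/(s * sqrt t)" for t
    by (simp add: divide_simps)
  ultimately show ?thesis by simp
qed

lemma d_zero:
  fixes c s :: real
  assumes s: "s > 0"
  shows "((\<lambda>t. (0 + c*t)/(s * sqrt t)) \<longlongrightarrow> 0) (at_right 0)"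
proof -
  have t2: "((\<lambda>t. (c/s) * sqrt t) \<longlongrightarrow> 0) (at_right 0)"
    using tendsto_mult[OF tendsto_const[of "c/s"] sqrt_right0] by simp
  show ?thesis
  proof (rule Lim_transform_eventually[OF t2])
    show "\<forall>\<^sub>F x in at_right 0. c / s * sqrt x = (0 + c * x) / (s * sqrt x)"
      using eventually_at_right_less[of "0::real"]
    proof eventually_elim
      case (elim x)
      have "x = sqrt x * sqrt x" using elim by simp
      then show ?case using elim s by (simp add: field_simps)
    qed
  qed
qed

lemma Phi_d_lim:
  assumes sig: "sig > 0" and P: "P > 0" and X: "X > 0"
  shows "((\<lambda>t. Phi (dbeta mu sig t b P X)) \<longlongrightarrow> (if P < X then 0 else if P = X then 1/2 else 1)) (at_right 0)"
proof -
  define c where "c = mu + sig^2 * (b - 1/2)"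
  have dd: "dbeta mu sig t b P X = (ln (P/X) + c*t)/(sig * sqrt t)" for t
    unfolding dbeta_def c_def by simp
  consider "P < X" | "P = X" | "P > X" by linarith
  then show ?thesis
  proof cases
    case 1
    then have "ln (P/X) < 0" using P X by (simp add: ln_div)
    from filterlim_compose[OF Phi_at_bot d_bot[OF this sig, of c]] show ?thesis using 1 by (simp add: dd)
  next
    case 2
    have "((\<lambda>t. Phi ((0 + c*t)/(sig * sqrt t))) \<longlongrightarrow> Phi 0) (at_right 0)"
      by (rule isCont_tendsto_compose[OF Phi_cont d_zero[OF sig]])
    then show ?thesis unfolding dd using 2 X by (simp add: Phi_zero)
  next
    case 3
    then have "ln (P/X) > 0" using P X by (simp add: ln_div)
    from filterlim_compose[OF Phi_at_top d_top[OF this sig, of c]] show ?thesis using 3 by (simp add: dd)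
  qed
qed


lemma Phi_isCont_comp[continuous_intros]: "isCont f x \<Longrightarrow> isCont (\<lambda>y. Phi (f y)) x"
  by (rule isCont_o2[OF _ Phi_cont])

lemma Phi_mono: "x \<le> y \<Longrightarrow> Phi x \<le> Phi y"
  unfolding Phi_cdf
  by (rule finite_borel_measure.cdf_nondecreasing[OF real_distribution.finite_borel_measure_M[OF real_distr_std]])

lemma half_cancel: "(X::real) * (Q * 2) / (r * 2 - mu * 2) = X * Q / (r - mu)"
proof -
  have a: "X * (Q * 2) = 2 * (X * Q)" "r * 2 - mu * 2 = 2 * (r - mu)" by simp_all
  show ?thesis unfolding a by (rule mult_divide_mult_cancel_left) simp
qed

context
  fixes mu sig r Q F C P :: real
  assumes sig: "sig > 0" and rmu: "r > mu" and rpos: "r > 0" and F: "F > 0" and FC: "F \<le> C" and P: "P > 0"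
    and Qp: "Q > 0"
begin

lemma S_lim_gen:
  assumes lF: "\<And>b. ((\<lambda>t. Phi (dbeta mu sig t b P F)) \<longlongrightarrow> lF) (at_right 0)"
    and lC: "\<And>b. ((\<lambda>t. Phi (dbeta mu sig t b P C)) \<longlongrightarrow> lC) (at_right 0)"
  shows "((\<lambda>t. S_C mu sig r Q F C t P) \<longlongrightarrow>
     E1 mu sig r Q F C * P powr b1 mu sig r * (1 - lF) + F * Q / r * (1 - lF)
     + G1 mu sig r Q C * P powr b1 mu sig r * (lF - lC) + G2 mu sig r Q F * P powr b2 mu sig r * (lF - lC)
     + P * Q / (r - mu) * (lF - lC) + H2 mu sig r Q F C * P powr b2 mu sig r * lC + C * Q / r * lC) (at_right 0)"
  unfolding S_C_def Let_def Phi_minus using rpos rmu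
  by (auto intro!: tendsto_eq_intros lF lC)

lemma S_lim: "((\<lambda>t. S_C mu sig r Q F C t P) \<longlongrightarrow> V_CP mu sig r Q F C P) (at_right 0)"
proof -
  define lF where "lF = (if P < F then 0 else if P = F then 1/2 else (1::real))"
  define lC where "lC = (if P < C then 0 else if P = C then 1/2 else (1::real))"
  have Cp: "C > 0" using F FC by simp
  note L = S_lim_gen[OF Phi_d_lim[OF sig P F, folded lF_def] Phi_d_lim[OF sig P Cp, folded lC_def]]
  have iF: "E1 mu sig r Q F C * F powr b1 mu sig r + F * Q / r = G1 mu sig r Q C * F powr b1 mu sig r + G2 mu sig r Q F * F powr b2 mu sig r + F * Q / (r - mu)"
    using ident_F[OF sig rmu rpos F FC] by auto
  have iC: "G1 mu sig r Q C * C powr b1 mu sig r + G2 mu sig r Q F * C powr b2 mu sig r + C * Q / (r - mu) = H2 mu sig r Q F C * C powr b2 mu sig r + C * Q / r"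
    using ident_C[OF sig rmu rpos F FC] by auto
  have eq: "E1 mu sig r Q F C * P powr b1 mu sig r * (1 - lF) + F * Q / r * (1 - lF)
     + G1 mu sig r Q C * P powr b1 mu sig r * (lF - lC) + G2 mu sig r Q F * P powr b2 mu sig r * (lF - lC)
     + P * Q / (r - mu) * (lF - lC) + H2 mu sig r Q F C * P powr b2 mu sig r * lC + C * Q / r * lC = V_CP mu sig r Q F C P"
  proof -
    consider "P < F" | "P = F" "F < C" | "F < P" "P < C" | "F < C" "P = C" | "P = F" "F = C" | "C < P"
      using FC by linarith
    then show ?thesis
    proof cases
      case 1 then show ?thesis unfolding lF_def lC_def V_CP_def using FC by auto
    next
      case 2
      have e: "E1 mu sig r Q F C * F powr b1 mu sig r = G1 mu sig r Q C * F powr b1 mu sig r + G2 mu sig r Q F * F powr b2 mu sig r + F * Q / (r - mu) - F * Q / r"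
        using iF by linarith
      have l: "lF = 1/2" "lC = 0" using 2 by (auto simp: lF_def lC_def)
      have V: "V_CP mu sig r Q F C F = G1 mu sig r Q C * F powr b1 mu sig r + G2 mu sig r Q F * F powr b2 mu sig r + F * Q / (r - mu)"
        using 2 by (simp add: V_CP_def)
      show ?thesis unfolding 2(1) unfolding V l e by (simp add: algebra_simps) (simp add: half_cancel)
    next
      case 3 then show ?thesis unfolding lF_def lC_def V_CP_def by auto
    next
      case 4
      have e: "H2 mu sig r Q F C * C powr b2 mu sig r = G1 mu sig r Q C * C powr b1 mu sig r + G2 mu sig r Q F * C powr b2 mu sig r + C * Q / (r - mu) - C * Q / r"
        using iC by linarith
      have l: "lF = 1" "lC = 1/2" using 4 by (auto simp: lF_def lC_def)
      have V: "V_CP mu sig r Q F C C = H2 mu sig r Q F C * C powr b2 mu sig r + C * Q / r"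
        using 4 by (simp add: V_CP_def)
      show ?thesis unfolding 4(2) unfolding V l e by (simp add: algebra_simps) (simp add: half_cancel)
    next
      case 5
      then have "E1 mu sig r Q F C = 0" "H2 mu sig r Q F C = 0" unfolding E1_def H2_def by auto
      then show ?thesis unfolding lF_def lC_def V_CP_def using 5 by (auto simp: field_simps)
    next
      case 6 then show ?thesis unfolding lF_def lC_def V_CP_def using FC by auto
    qed
  qed
  show ?thesis using L unfolding eq .
qed

lemma Kf_nonneg: "t > 0 \<Longrightarrow> Kf mu sig r Q F C P t \<ge> 0"
proof -
  assume t: "t > 0"
  have Cp: "C > 0" using F FC by simp
  have "ln (P / C) \<le> ln (P / F)" using P F FC Cp by (simp add: ln_div)
  then have "dbeta mu sig t 1 P C \<le> dbeta mu sig t 1 P F"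
    unfolding dbeta_def using sig t by (intro divide_right_mono) auto
  then have "Phi (dbeta mu sig t 1 P C) \<le> Phi (dbeta mu sig t 1 P F)" by (rule Phi_mono)
  moreover have "0 \<le> Phi x" for x by (rule Phi_nonneg)
  ultimately show ?thesis unfolding Kf_def using F Cp P Qp
    by (intro mult_nonneg_nonneg add_nonneg_nonneg) auto
qed

lemma Kf_cont: "t > 0 \<Longrightarrow> isCont (Kf mu sig r Q F C P) t"
  unfolding Kf_def dbeta_def[abs_def] using sig
  by (auto intro!: continuous_intros)

lemma FTC_part:
  assumes T: "T > 0"
  shows "set_integrable lborel (einterval 0 T) (Kf mu sig r Q F C P)"
    "(LBINT t=0..T. Kf mu sig r Q F C P t) = V_CP mu sig r Q F C P - S_C mu sig r Q F C T P"
proof -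
  have Cp: "C > 0" using F FC by simp
  note ftc = interval_integral_FTC_nonneg[where F="\<lambda>t. - S_C mu sig r Q F C t P" and f="Kf mu sig r Q F C P"
      and a=0 and b="ereal T" and A="- V_CP mu sig r Q F C P" and B="- S_C mu sig r Q F C T P"]
  have D: "DERIV (\<lambda>t. - S_C mu sig r Q F C t P) x :> Kf mu sig r Q F C P x" if "x > 0" for x
    using DERIV_minus[OF S_deriv[OF sig rmu rpos F FC P that]] by simp
  have A: "(((\<lambda>t. - S_C mu sig r Q F C t P) \<circ> real_of_ereal) \<longlongrightarrow> - V_CP mu sig r Q F C P) (at_right (0::ereal))"
    unfolding zero_ereal_def ereal_tendsto_simps using tendsto_minus[OF S_lim] by simp
  have cS: "isCont (\<lambda>t. - S_C mu sig r Q F C t P) T"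
    using D[OF T] DERIV_isCont by blast
  have B: "(((\<lambda>t. - S_C mu sig r Q F C t P) \<circ> real_of_ereal) \<longlongrightarrow> - S_C mu sig r Q F C T P) (at_left (ereal T))"
    unfolding ereal_tendsto_simps using cS
    by (simp add: isCont_def filterlim_at_split)
  show "set_integrable lborel (einterval 0 T) (Kf mu sig r Q F C P)"
    "(LBINT t=0..T. Kf mu sig r Q F C P t) = V_CP mu sig r Q F C P - S_C mu sig r Q F C T P"
    using ftc[OF _ D Kf_cont _ A B] T
    by (auto simp: zero_ereal_def Kf_nonneg intro!: AE_I2)
qed

end


lemma nd_shift: "std_normal_density z * exp (b * z) = exp (b^2/2) * normal_density b 1 z"
proof -
  have "b * z + - (z * z) / 2 = b * b / 2 + - ((z - b) * (z - b)) / 2" by (simp add: field_simps)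
  then show ?thesis by (simp add: normal_density_def mult_exp_exp power2_eq_square)
qed

lemma int_nd_exp: "integrable lborel (\<lambda>z. std_normal_density z * exp (b * z))"
  unfolding nd_shift using integrable_normal_density[of b 1] by simp

lemma set_int_nd_exp: "set_integrable lborel {c<..} (\<lambda>z. std_normal_density z * exp (b * z))"
  unfolding set_integrable_def using int_nd_exp
  by (intro integrable_mult_indicator) auto

lemma set_int_nd: "set_integrable lborel {c<..} std_normal_density"
  unfolding set_integrable_def
  by (intro integrable_mult_indicator) auto

lemma tail_exp: "(LINT z:{c<..}|lborel. std_normal_density z * exp (b * z)) = exp (b^2/2) * Phi (b - c)"
proof -
  have "(LINT z:{c<..}|lborel. std_normal_density z * exp (b * z)) = (LINT z:{c<..}|lborel. exp (b^2/2) * normal_density b 1 z)"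
    by (simp add: nd_shift)
  also have "\<dots> = exp (b^2/2) * (LINT z:{c<..}|lborel. normal_density b 1 z)"
    by (rule set_integral_mult_right)
  also have "\<dots> = exp (b^2/2) * Phi (b - c)" by (simp add: Phi_tail)
  finally show ?thesis .
qed

lemma tail0: "(LINT z:{c<..}|lborel. std_normal_density z) = Phi (- c)"
  using Phi_tail[of c 0] by simp

lemma int_exp: "(\<integral>z. std_normal_density z * exp (b * z) \<partial>lborel) = exp (b^2/2)"
  unfolding nd_shift by simp

lemma call_pointwise:
  assumes X: "X > 0" and P: "P > 0" and b: "b > 0"
  shows "std_normal_density z * max (P * exp (a + b * z) - X) 0
    = indicator {(ln (X / P) - a) / b <..} z * (P * exp a * (std_normal_density z * exp (b * z)) - X * std_normal_density z)"
proof -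
  have iff: "P * exp (a + b * z) > X \<longleftrightarrow> z > (ln (X / P) - a) / b"
  proof -
    have "P * exp (a + b * z) > X \<longleftrightarrow> exp (a + b * z) > X / P" using P by (simp add: field_simps)
    also have "\<dots> \<longleftrightarrow> a + b * z > ln (X / P)" using X P
      by (metis exp_less_cancel_iff exp_ln divide_pos_pos)
    also have "\<dots> \<longleftrightarrow> z > (ln (X / P) - a) / b" using b by (simp add: field_simps)
    finally show ?thesis .
  qed
  show ?thesis
  proof (cases "z > (ln (X / P) - a) / b")
    case True
    then have "P * exp (a + b * z) > X" using iff by simp
    then show ?thesis using True by (simp add: exp_add algebra_simps)
  next
    case False
    then have "P * exp (a + b * z) \<le> X" using iff by simp
    then show ?thesis using False by simp
  qed
qed

lemma call_int:
  fixes a b X P :: real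
  assumes X: "X > 0" and P: "P > 0" and b: "b > 0"
  defines "c \<equiv> (ln (X / P) - a) / b"
  shows "integrable lborel (\<lambda>z. std_normal_density z * max (P * exp (a + b * z) - X) 0)"
    "(\<integral>z. std_normal_density z * max (P * exp (a + b * z) - X) 0 \<partial>lborel)
       = P * exp a * exp (b^2/2) * Phi (b - c) - X * Phi (- c)"
proof -
  have si: "set_integrable lborel {c<..} (\<lambda>z. P * exp a * (std_normal_density z * exp (b * z)) - X * std_normal_density z)"
    by (intro set_integral_diff set_integrable_mult_right set_int_nd_exp set_int_nd)
  have eq: "(\<lambda>z. std_normal_density z * max (P * exp (a + b * z) - X) 0)
     = (\<lambda>z. indicator {c<..} z * (P * exp a * (std_normal_density z * exp (b * z)) - X * std_normal_density z))"
    unfolding c_def using call_pointwise[OF X P b] by auto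
  show "integrable lborel (\<lambda>z. std_normal_density z * max (P * exp (a + b * z) - X) 0)"
    unfolding eq using si by (simp add: set_integrable_def)
  have "(\<integral>z. std_normal_density z * max (P * exp (a + b * z) - X) 0 \<partial>lborel)
     = (LINT z:{c<..}|lborel. P * exp a * (std_normal_density z * exp (b * z)) - X * std_normal_density z)"
    unfolding eq by (simp add: set_lebesgue_integral_def)
  also have "\<dots> = (LINT z:{c<..}|lborel. P * exp a * (std_normal_density z * exp (b * z))) - (LINT z:{c<..}|lborel. X * std_normal_density z)"
    by (intro set_integral_diff set_integrable_mult_right set_int_nd_exp set_int_nd)
  also have "\<dots> = P * exp a * exp (b^2/2) * Phi (b - c) - X * Phi (- c)"
    by (simp add: set_integral_mult_right tail_exp tail0)
  finally show "(\<integral>z. std_normal_density z * max (P * exp (a + b * z) - X) 0 \<partial>lborel)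
       = P * exp a * exp (b^2/2) * Phi (b - c) - X * Phi (- c)" .
qed

lemma collar_split: "F \<le> C \<Longrightarrow> collar_payoff F C Q p = Q * (F + max (p - F) 0 - max (p - C) 0)"
  unfolding collar_payoff_def by (auto simp: min_def max_def algebra_simps)

lemma payoff_int:
  fixes a b P F C Q :: real
  assumes F: "F > 0" and FC: "F \<le> C" and P: "P > 0" and b: "b > 0"
  defines "cF \<equiv> (ln (F / P) - a) / b" and "cC \<equiv> (ln (C / P) - a) / b"
  shows "integrable lborel (\<lambda>z. std_normal_density z * collar_payoff F C Q (P * exp (a + b * z)))"
    "(\<integral>z. std_normal_density z * collar_payoff F C Q (P * exp (a + b * z)) \<partial>lborel)
      = Q * (F + (P * exp a * exp (b^2/2) * Phi (b - cF) - F * Phi (- cF))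
               - (P * exp a * exp (b^2/2) * Phi (b - cC) - C * Phi (- cC)))"
proof -
  have Cp: "C > 0" using F FC by simp
  have eq: "(\<lambda>z. std_normal_density z * collar_payoff F C Q (P * exp (a + b * z)))
    = (\<lambda>z. Q * (F * std_normal_density z + std_normal_density z * max (P * exp (a + b * z) - F) 0
              - std_normal_density z * max (P * exp (a + b * z) - C) 0))"
    by (simp add: collar_split[OF FC] algebra_simps fun_eq_iff)
  note iF = call_int[OF F P b, of a] and iC = call_int[OF Cp P b, of a]
  have i0: "integrable lborel (\<lambda>z. F * std_normal_density z)" by simp
  show "integrable lborel (\<lambda>z. std_normal_density z * collar_payoff F C Q (P * exp (a + b * z)))"
  proof -
    have "integrable lborel (\<lambda>x. F * std_normal_density x +
           std_normal_density x * max (P * exp (a + b * x) - F) 0 -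
           std_normal_density x * max (P * exp (a + b * x) - C) 0)"
      by (rule Bochner_Integration.integrable_diff[OF Bochner_Integration.integrable_add[OF i0 iF(1)] iC(1)])
    then show ?thesis unfolding eq by (intro integrable_mult_right)
  qed
  show "(\<integral>z. std_normal_density z * collar_payoff F C Q (P * exp (a + b * z)) \<partial>lborel)
      = Q * (F + (P * exp a * exp (b^2/2) * Phi (b - cF) - F * Phi (- cF))
               - (P * exp a * exp (b^2/2) * Phi (b - cC) - C * Phi (- cC)))"
    unfolding eq cF_def cC_def
    by (simp add: Bochner_Integration.integral_diff Bochner_Integration.integral_add Bochner_Integration.integrable_diff Bochner_Integration.integrable_add i0 iF iC)
qed

lemma payoff_t:
  assumes F: "F > 0" and FC: "F \<le> C" and P: "P > 0" and sig: "sig > 0" and t: "t > 0"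
  shows "integrable lborel (\<lambda>z. std_normal_density z * collar_payoff F C Q (P * exp ((mu - sig^2/2) * t + sig * (sqrt t * z))))"
    "exp (- r * t) * (\<integral>z. std_normal_density z * collar_payoff F C Q (P * exp ((mu - sig^2/2) * t + sig * (sqrt t * z))) \<partial>lborel)
      = Kf mu sig r Q F C P t"
proof -
  define a where "a = (mu - sig^2/2) * t"
  define b where "b = sig * sqrt t"
  have b: "b > 0" unfolding b_def using sig t by simp
  have fe: "P * exp ((mu - sig^2/2) * t + sig * (sqrt t * z)) = P * exp (a + b * z)" for z
    unfolding a_def b_def by (simp add: mult.assoc)
  note pi = payoff_int[OF F FC P b, where a=a and Q=Q]
  show "integrable lborel (\<lambda>z. std_normal_density z * collar_payoff F C Q (P * exp ((mu - sig^2/2) * t + sig * (sqrt t * z))))"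
    unfolding fe by (rule pi(1))
  have Cp: "C > 0" using F FC by simp
  have b2: "b^2 = sig^2 * t" unfolding b_def using t by (simp add: power_mult_distrib)
  have d0: "- ((ln (X / P) - a) / b) = dbeta mu sig t 0 P X" if "X > 0" for X
  proof -
    have "ln (X / P) = - ln (P / X)" using that P by (simp add: ln_div)
    then show ?thesis unfolding dbeta_def a_def b_def using sig t by (simp add: field_simps)
  qed
  have d1: "b - ((ln (X / P) - a) / b) = dbeta mu sig t 1 P X" if "X > 0" for X
  proof -
    have "b - ((ln (X / P) - a) / b) = b + dbeta mu sig t 0 P X" using d0[OF that] by simp
    also have "\<dots> = (b^2 + ln (P / X) + (mu - sig^2/2) * t) / b"
      unfolding dbeta_def b_def using sig t by (simp add: field_simps power2_eq_square)
    also have "\<dots> = dbeta mu sig t 1 P X"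
      unfolding b2 dbeta_def b_def using sig t by (simp add: field_simps)
    finally show ?thesis .
  qed
  have ea: "exp a * exp (b^2/2) = exp (mu * t)"
    unfolding b2 a_def by (simp add: mult_exp_exp algebra_simps)
  have "exp (- r * t) * (\<integral>z. std_normal_density z * collar_payoff F C Q (P * exp ((mu - sig^2/2) * t + sig * (sqrt t * z))) \<partial>lborel)
      = exp (- r * t) * (Q * (F + (P * (exp a * exp (b^2/2)) * Phi (dbeta mu sig t 1 P F) - F * Phi (dbeta mu sig t 0 P F))
               - (P * (exp a * exp (b^2/2)) * Phi (dbeta mu sig t 1 P C) - C * Phi (dbeta mu sig t 0 P C))))"
    unfolding fe pi(2) d0[OF F] d0[OF Cp] d1[OF F] d1[OF Cp] by (simp add: mult.assoc)
  also have "\<dots> = Kf mu sig r Q F C P t"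
    unfolding ea Kf_def Phi_minus by (simp add: algebra_simps)
  finally show "exp (- r * t) * (\<integral>z. std_normal_density z * collar_payoff F C Q (P * exp ((mu - sig^2/2) * t + sig * (sqrt t * z))) \<partial>lborel)
      = Kf mu sig r Q F C P t" .
qed

lemma gbm_t:
  assumes sig: "sig > 0" and t: "t > 0"
  shows "integrable lborel (\<lambda>z. std_normal_density z * (P * exp ((mu - sig^2/2) * t + sig * (sqrt t * z))))"
    "(\<integral>z. std_normal_density z * (P * exp ((mu - sig^2/2) * t + sig * (sqrt t * z))) \<partial>lborel) = P * exp (mu * t)"
proof -
  have eq: "(\<lambda>z. std_normal_density z * (P * exp ((mu - sig^2/2) * t + sig * (sqrt t * z))))
      = (\<lambda>z. (P * exp ((mu - sig^2/2) * t)) * (std_normal_density z * exp ((sig * sqrt t) * z)))"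
    by (auto simp: fun_eq_iff mult_exp_exp algebra_simps)
  show "integrable lborel (\<lambda>z. std_normal_density z * (P * exp ((mu - sig^2/2) * t + sig * (sqrt t * z))))"
    unfolding eq by (intro integrable_mult_right int_nd_exp)
  have b2: "(sig * sqrt t)^2 = sig^2 * t" using t by (simp add: power_mult_distrib)
  show "(\<integral>z. std_normal_density z * (P * exp ((mu - sig^2/2) * t + sig * (sqrt t * z))) \<partial>lborel) = P * exp (mu * t)"
    unfolding eq integral_mult_right_zero int_exp b2 by (simp add: mult.assoc mult_exp_exp algebra_simps)
qed


context
  fixes M :: "'a measure" and W :: "real \<Rightarrow> 'a \<Rightarrow> real"
  assumes BM: "std_brownian_motion M W"
begin

lemma probM: "prob_space M" using BM unfolding std_brownian_motion_def by auto
lemma Wmeas: "t \<ge> 0 \<Longrightarrow> W t \<in> borel_measurable M" using BM unfolding std_brownian_motion_def by auto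
lemma W0: "\<omega> \<in> space M \<Longrightarrow> W 0 \<omega> = 0" using BM unfolding std_brownian_motion_def by auto
lemma Wcont: "\<omega> \<in> space M \<Longrightarrow> continuous_on {0..} (\<lambda>t. W t \<omega>)" using BM unfolding std_brownian_motion_def by auto
lemma Wdist: "t > 0 \<Longrightarrow> distributed M lborel (\<lambda>\<omega>. W t \<omega> - W 0 \<omega>) (normal_density 0 (sqrt t))"
proof -
  assume t: "t > 0"
  have "\<forall>s t. 0 \<le> s \<and> s < t \<longrightarrow> distributed M lborel (\<lambda>\<omega>. W t \<omega> - W s \<omega>) (normal_density 0 (sqrt (t - s)))"
    using BM unfolding std_brownian_motion_def by blast
  from this[rule_format, of 0 t] t show ?thesis by simp
qed

lemma floor_div_lim: "(\<lambda>n. real_of_int \<lfloor>real n * s\<rfloor> / real n) \<longlonglongrightarrow> s"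
proof (rule tendsto_sandwich[where f="\<lambda>n. s - 1 / real n" and h="\<lambda>n. s"])
  show "\<forall>\<^sub>F n in sequentially. s - 1 / real n \<le> real_of_int \<lfloor>real n * s\<rfloor> / real n"
    using eventually_gt_at_top[of "0::nat"]
  proof eventually_elim
    case (elim n)
    have "real n * s - 1 \<le> real_of_int \<lfloor>real n * s\<rfloor>" by linarith
    then have "(real n * s - 1) / real n \<le> real_of_int \<lfloor>real n * s\<rfloor> / real n"
      by (rule divide_right_mono) simp
    moreover have "(real n * s - 1) / real n = s - 1 / real n" using elim by (simp add: field_simps)
    ultimately show ?case by simp
  qed
  show "\<forall>\<^sub>F n in sequentially. real_of_int \<lfloor>real n * s\<rfloor> / real n \<le> s"
    using eventually_gt_at_top[of "0::nat"]
  proof eventually_elim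
    case (elim n)
    have "real_of_int \<lfloor>real n * s\<rfloor> \<le> real n * s" by linarith
    then have "real_of_int \<lfloor>real n * s\<rfloor> / real n \<le> real n * s / real n"
      by (rule divide_right_mono) simp
    then show ?case using elim by simp
  qed
  show "(\<lambda>n. s - 1 / real n) \<longlonglongrightarrow> s"
    using tendsto_diff[OF tendsto_const[of s] lim_inverse_n'] by simp
qed simp

lemma Wjoint[measurable]: "(\<lambda>x. W (max 0 (snd x)) (fst x)) \<in> borel_measurable (M \<Otimes>\<^sub>M lborel)"
proof (rule borel_measurable_LIMSEQ_real)
  define u where "u n x = W (max 0 (real_of_int \<lfloor>real n * snd x\<rfloor> / real n)) (fst x)" for n x
  show "u n \<in> borel_measurable (M \<Otimes>\<^sub>M lborel)" for n
  proof -
    have f: "(\<lambda>x. W (max 0 (real_of_int i / real n)) (fst x)) \<in> borel_measurable (M \<Otimes>\<^sub>M lborel)" for i :: int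
      by (rule measurable_compose[OF measurable_fst Wmeas]) simp
    have g0: "(\<lambda>x. real n * snd x) \<in> borel_measurable (M \<Otimes>\<^sub>M lborel)" by measurable
    have g: "(\<lambda>x. \<lfloor>real n * snd x\<rfloor>) \<in> measurable (M \<Otimes>\<^sub>M lborel) (count_space UNIV)"
      by (rule measurable_compose[OF g0 measurable_real_floor])
    show ?thesis unfolding u_def[abs_def]
      by (rule measurable_compose_countable'[OF f g]) simp
  qed
  show "(\<lambda>n. u n x) \<longlonglongrightarrow> W (max 0 (snd x)) (fst x)" if x: "x \<in> space (M \<Otimes>\<^sub>M lborel)" for x
  proof -
    have om: "fst x \<in> space M" using x by (auto simp: space_pair_measure)
    have mx: "(\<lambda>n. max 0 (real_of_int \<lfloor>real n * snd x\<rfloor> / real n)) \<longlonglongrightarrow> max 0 (snd x)"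
      by (intro tendsto_max tendsto_const floor_div_lim)
    have "((\<lambda>n. W (max 0 (real_of_int \<lfloor>real n * snd x\<rfloor> / real n)) (fst x)) \<longlongrightarrow> W (max 0 (snd x)) (fst x)) sequentially"
      by (rule continuous_on_tendsto_compose[OF Wcont[OF om] mx]) auto
    then show ?thesis unfolding u_def .
  qed
qed

end


lemma enn_int:
  assumes Am: "A \<in> borel_measurable M" and Av: "(\<integral>\<^sup>+x. A x \<partial>M) = ennreal v" and v: "v \<ge> 0"
  shows "integrable M (\<lambda>x. enn2real (A x))" "(\<integral>x. enn2real (A x) \<partial>M) = v"
proof -
  have ae: "AE x in M. A x \<noteq> \<infinity>" using nn_integral_PInf_AE[OF Am] Av by simp
  have eq: "(\<integral>\<^sup>+x. ennreal (enn2real (A x)) \<partial>M) = ennreal v"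
    unfolding Av[symmetric] using ae by (intro nn_integral_cong_AE) (auto simp: less_top)
  show "integrable M (\<lambda>x. enn2real (A x))"
    by (rule integrableI_nonneg) (use Am eq in auto)
  show "(\<integral>x. enn2real (A x) \<partial>M) = v"
    by (subst integral_eq_nn_integral) (use Am eq v in auto)
qed

lemma tail_int:
  assumes rmu: "r > mu" and T: "T > 0" and P: "P > 0" and Q: "Q > 0"
  shows "set_integrable lborel (einterval T \<infinity>) (\<lambda>t. P * Q * exp (- (r - mu) * t))"
    "(LBINT t=ereal T..\<infinity>. P * Q * exp (- (r - mu) * t)) = P * Q / (r - mu) * exp (- (r - mu) * T)"
proof -
  let ?F = "\<lambda>t. - (P * Q / (r - mu)) * exp (- (r - mu) * t)"
  have D: "DERIV ?F x :> P * Q * exp (- (r - mu) * x)" for x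
  proof -
    have c: "r - mu \<noteq> 0" using rmu by simp
    show ?thesis
      apply (rule DERIV_cong)
       apply (rule derivative_eq_intros refl)+
      apply (simp only: mult_minus_left mult_minus_right minus_minus mult_1_right)
      using c by (simp add: field_simps)
  qed
  have A: "((?F \<circ> real_of_ereal) \<longlongrightarrow> ?F T) (at_right (ereal T))"
    unfolding ereal_tendsto_simps by (intro tendsto_intros)
  have e: "((\<lambda>t. exp (- (r - mu) * t)) \<longlongrightarrow> 0) at_top"
    using rmu by (auto intro!: exp_at_bot[THEN filterlim_compose] filterlim_tendsto_neg_mult_at_bot filterlim_ident)
  have B: "((?F \<circ> real_of_ereal) \<longlongrightarrow> 0) (at_left \<infinity>)"
    unfolding ereal_tendsto_simps using tendsto_mult[OF tendsto_const[of "- (P * Q / (r - mu))"] e] by simp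
  note ftc = interval_integral_FTC_nonneg[OF _ D _ _ A B]
  show "set_integrable lborel (einterval T \<infinity>) (\<lambda>t. P * Q * exp (- (r - mu) * t))"
    using ftc(1) P Q by (auto intro!: AE_I2)
  show "(LBINT t=ereal T..\<infinity>. P * Q * exp (- (r - mu) * t)) = P * Q / (r - mu) * exp (- (r - mu) * T)"
    using ftc(2) P Q by (auto intro!: AE_I2)
qed

context
  fixes M :: "'a measure" and W :: "real \<Rightarrow> 'a \<Rightarrow> real"
  assumes BM: "std_brownian_motion M W"
begin

lemma E_gen:
  assumes t: "t > 0" and G[measurable]: "G \<in> borel_measurable borel"
  shows "(\<integral>\<^sup>+\<omega>. ennreal (G (W t \<omega>)) \<partial>M) = (\<integral>\<^sup>+z. ennreal (std_normal_density z * G (sqrt t * z)) \<partial>lborel)"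
proof -
  have d: "distributed M lborel (\<lambda>\<omega>. (W t \<omega> - W 0 \<omega> - 0) / sqrt t) std_normal_density"
    using prob_space.normal_standard_normal_convert[OF probM[OF BM], where \<sigma>="sqrt t" and X="\<lambda>\<omega>. W t \<omega> - W 0 \<omega>" and \<mu>=0]
      Wdist[OF BM t] t by simp
  have "(\<integral>\<^sup>+z. ennreal (std_normal_density z) * ennreal (G (sqrt t * z)) \<partial>lborel)
      = (\<integral>\<^sup>+\<omega>. ennreal (G (sqrt t * ((W t \<omega> - W 0 \<omega> - 0) / sqrt t))) \<partial>M)"
    by (rule distributed_nn_integral[OF d]) measurable
  also have "\<dots> = (\<integral>\<^sup>+\<omega>. ennreal (G (W t \<omega>)) \<partial>M)"
    using t by (intro nn_integral_cong) (simp add: W0[OF BM])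
  finally show ?thesis by (simp add: ennreal_mult')
qed

end


lemma collar_nonneg: "F > 0 \<Longrightarrow> F \<le> C \<Longrightarrow> Q \<ge> 0 \<Longrightarrow> collar_payoff F C Q p \<ge> 0"
  unfolding collar_payoff_def by (auto simp: min_def max_def)

lemma E_payoff:
  assumes BM: "std_brownian_motion M W" and sig: "sig > 0" and F: "F > 0" and FC: "F \<le> C"
    and P: "P > 0" and Q: "Q > 0" and t: "t > 0"
  shows "(\<integral>\<^sup>+\<omega>. ennreal (collar_payoff F C Q (gbm mu sig P W t \<omega>) * exp (- r * t)) \<partial>M) = ennreal (Kf mu sig r Q F C P t)"
proof -
  define G where "G w = collar_payoff F C Q (P * exp ((mu - sig^2/2) * t + sig * w)) * exp (- r * t)" for w
  have Gm: "G \<in> borel_measurable borel" unfolding G_def[abs_def] collar_payoff_def by measurable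
  have eqz: "(\<lambda>z. std_normal_density z * G (sqrt t * z))
      = (\<lambda>z. exp (- r * t) * (std_normal_density z * collar_payoff F C Q (P * exp ((mu - sig^2/2) * t + sig * (sqrt t * z)))))"
    unfolding G_def by (auto simp: fun_eq_iff)
  note pt1 = payoff_t(1)[OF F FC P sig t, where Q=Q and mu=mu]
  note pt2 = payoff_t(2)[OF F FC P sig t, where Q=Q and mu=mu and r=r]
  have "(\<integral>\<^sup>+\<omega>. ennreal (collar_payoff F C Q (gbm mu sig P W t \<omega>) * exp (- r * t)) \<partial>M) = (\<integral>\<^sup>+\<omega>. ennreal (G (W t \<omega>)) \<partial>M)"
    by (simp add: gbm_def G_def)
  also have "\<dots> = (\<integral>\<^sup>+z. ennreal (std_normal_density z * G (sqrt t * z)) \<partial>lborel)"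
    by (rule E_gen[OF BM t Gm])
  also have "\<dots> = ennreal (\<integral>z. std_normal_density z * G (sqrt t * z) \<partial>lborel)"
  proof (rule nn_integral_eq_integral)
    show "integrable lborel (\<lambda>z. std_normal_density z * G (sqrt t * z))"
      unfolding eqz by (intro integrable_mult_right pt1)
    show "AE z in lborel. 0 \<le> std_normal_density z * G (sqrt t * z)"
      unfolding G_def using collar_nonneg[OF F FC] Q by (auto intro!: AE_I2)
  qed
  also have "(\<integral>z. std_normal_density z * G (sqrt t * z) \<partial>lborel) = Kf mu sig r Q F C P t"
    unfolding eqz integral_mult_right_zero by (rule pt2)
  finally show ?thesis .
qed

lemma E_gbm:
  assumes BM: "std_brownian_motion M W" and sig: "sig > 0" and P: "P > 0" and Q: "Q > 0" and t: "t > 0"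
  shows "(\<integral>\<^sup>+\<omega>. ennreal (gbm mu sig P W t \<omega> * Q * exp (- r * t)) \<partial>M) = ennreal (P * Q * exp (- (r - mu) * t))"
proof -
  define G where "G w = P * exp ((mu - sig^2/2) * t + sig * w) * Q * exp (- r * t)" for w
  have Gm: "G \<in> borel_measurable borel" unfolding G_def[abs_def] by measurable
  have eqz: "(\<lambda>z. std_normal_density z * G (sqrt t * z))
      = (\<lambda>z. (Q * exp (- r * t)) * (std_normal_density z * (P * exp ((mu - sig^2/2) * t + sig * (sqrt t * z)))))"
    unfolding G_def by (auto simp: fun_eq_iff)
  note gt = gbm_t[OF sig t, where P=P and mu=mu]
  have "(\<integral>\<^sup>+\<omega>. ennreal (gbm mu sig P W t \<omega> * Q * exp (- r * t)) \<partial>M) = (\<integral>\<^sup>+\<omega>. ennreal (G (W t \<omega>)) \<partial>M)"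
    by (simp add: gbm_def G_def)
  also have "\<dots> = (\<integral>\<^sup>+z. ennreal (std_normal_density z * G (sqrt t * z)) \<partial>lborel)"
    by (rule E_gen[OF BM t Gm])
  also have "\<dots> = ennreal (\<integral>z. std_normal_density z * G (sqrt t * z) \<partial>lborel)"
  proof (rule nn_integral_eq_integral)
    show "integrable lborel (\<lambda>z. std_normal_density z * G (sqrt t * z))"
      unfolding eqz by (intro integrable_mult_right gt(1))
    show "AE z in lborel. 0 \<le> std_normal_density z * G (sqrt t * z)"
      unfolding G_def using P Q by (auto intro!: AE_I2)
  qed
  also have "(\<integral>z. std_normal_density z * G (sqrt t * z) \<partial>lborel) = P * Q * exp (- (r - mu) * t)"
    unfolding eqz integral_mult_right_zero gt(2) by (simp add: mult_exp_exp algebra_simps)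
  finally show ?thesis .
qed


theorem proposition1:
  fixes M :: "'a measure" and W :: "real \<Rightarrow> 'a \<Rightarrow> real"
    and mu sig r Q T F C P :: real
  assumes "std_brownian_motion M W"
    and "sig > 0" and "r > mu" and "r > 0"
    and "Q > 0" and "T > 0" and "P > 0"
    and "0 < F" and "F \<le> C"
  shows "V_C M W mu sig r Q T F C P
           = V_CP mu sig r Q F C P - S_C mu sig r Q F C T P
             + P * Q / (r - mu) * exp (- (r - mu) * T)"
proof -
  note BM = assms(1)
  have sig: "sig > 0" and rmu: "r > mu" and rpos: "r > 0" and Q: "Q > 0" and T: "T > 0" and P: "P > 0"
    and F: "F > 0" and FC: "F \<le> C" using assms by auto
  have probM': "prob_space M" by (rule probM[OF BM])
  interpret L: sigma_finite_measure lborel by (rule sigma_finite_lborel)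
  have psf: "pair_sigma_finite M lborel"
    by (intro pair_sigma_finite.intro prob_space_imp_sigma_finite[OF probM'] sigma_finite_lborel)
  define g1 where "g1 x = indicator {0..T} (snd x) * (collar_payoff F C Q (P * exp ((mu - sig^2/2) * snd x + sig * W (max 0 (snd x)) (fst x))) * exp (- r * snd x))" for x :: "'a \<times> real"
  define g2 where "g2 x = indicator {T..} (snd x) * (P * exp ((mu - sig^2/2) * snd x + sig * W (max 0 (snd x)) (fst x)) * Q * exp (- r * snd x))" for x :: "'a \<times> real"
  note Wj[measurable] = Wjoint[OF BM]
  have m1[measurable]: "g1 \<in> borel_measurable (M \<Otimes>\<^sub>M lborel)" unfolding g1_def[abs_def] collar_payoff_def by measurable
  have m2[measurable]: "g2 \<in> borel_measurable (M \<Otimes>\<^sub>M lborel)" unfolding g2_def[abs_def] by measurable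
  have g1nn: "g1 x \<ge> 0" for x unfolding g1_def using collar_nonneg[OF F FC, of Q] Q by (auto simp: indicator_def)
  have g2nn: "g2 x \<ge> 0" for x unfolding g2_def using P Q by (auto simp: indicator_def)
  define I1 where "I1 \<omega> = (\<integral>\<^sup>+t. ennreal (g1 (\<omega>, t)) \<partial>lborel)" for \<omega>
  define I2 where "I2 \<omega> = (\<integral>\<^sup>+t. ennreal (g2 (\<omega>, t)) \<partial>lborel)" for \<omega>
  have I1m: "I1 \<in> borel_measurable M" unfolding I1_def by measurable
  have I2m: "I2 \<in> borel_measurable M" unfolding I2_def by measurable
  have inner1: "(LINT t:{0..T}|lborel. collar_payoff F C Q (gbm mu sig P W t \<omega>) * exp (- r * t)) = enn2real (I1 \<omega>)"
    if om: "\<omega> \<in> space M" for \<omega>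
  proof -
    have "(LINT t:{0..T}|lborel. collar_payoff F C Q (gbm mu sig P W t \<omega>) * exp (- r * t)) = (\<integral>t. g1 (\<omega>, t) \<partial>lborel)"
      unfolding set_lebesgue_integral_def g1_def gbm_def by (intro Bochner_Integration.integral_cong) (auto simp: indicator_def)
    also have "\<dots> = enn2real (I1 \<omega>)" unfolding I1_def
      by (rule integral_eq_nn_integral) (use om g1nn in \<open>auto intro!: AE_I2 measurable_compose_Pair1[OF om m1]\<close>)
    finally show ?thesis .
  qed
  have inner2: "(LINT t:{T..}|lborel. gbm mu sig P W t \<omega> * Q * exp (- r * t)) = enn2real (I2 \<omega>)"
    if om: "\<omega> \<in> space M" for \<omega>
  proof -
    have "(LINT t:{T..}|lborel. gbm mu sig P W t \<omega> * Q * exp (- r * t)) = (\<integral>t. g2 (\<omega>, t) \<partial>lborel)"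
      unfolding set_lebesgue_integral_def g2_def gbm_def using T by (intro Bochner_Integration.integral_cong) (auto simp: indicator_def)
    also have "\<dots> = enn2real (I2 \<omega>)" unfolding I2_def
      by (rule integral_eq_nn_integral) (use om g2nn in \<open>auto intro!: AE_I2 measurable_compose_Pair1[OF om m2]\<close>)
    finally show ?thesis .
  qed
  have VC: "V_C M W mu sig r Q T F C P = (\<integral>\<omega>. enn2real (I1 \<omega>) + enn2real (I2 \<omega>) \<partial>M)"
    unfolding V_C_def by (intro Bochner_Integration.integral_cong refl) (simp only: inner1 inner2)
  have fm1: "(\<lambda>x. ennreal (g1 x)) \<in> borel_measurable (M \<Otimes>\<^sub>M lborel)" by measurable
  have fm2: "(\<lambda>x. ennreal (g2 x)) \<in> borel_measurable (M \<Otimes>\<^sub>M lborel)" by measurable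
  have F1: "(\<integral>\<^sup>+\<omega>. I1 \<omega> \<partial>M) = (\<integral>\<^sup>+t. (\<integral>\<^sup>+\<omega>. ennreal (g1 (\<omega>, t)) \<partial>M) \<partial>lborel)"
    unfolding I1_def using pair_sigma_finite.Fubini[OF psf fm1] by simp
  have F2: "(\<integral>\<^sup>+\<omega>. I2 \<omega> \<partial>M) = (\<integral>\<^sup>+t. (\<integral>\<^sup>+\<omega>. ennreal (g2 (\<omega>, t)) \<partial>M) \<partial>lborel)"
    unfolding I2_def using pair_sigma_finite.Fubini[OF psf fm2] by simp
  have ein: "t \<in> einterval a b \<longleftrightarrow> a < ereal t \<and> ereal t < b" for t a b by (simp add: einterval_def)
  have A1: "AE t in lborel. (\<integral>\<^sup>+\<omega>. ennreal (g1 (\<omega>, t)) \<partial>M) = ennreal (indicator (einterval 0 T) t * Kf mu sig r Q F C P t)"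
    using AE_lborel_singleton[of 0] AE_lborel_singleton[of T]
  proof eventually_elim
    case (elim t)
    show ?case
    proof (cases "0 < t \<and> t < T")
      case True
      have "(\<integral>\<^sup>+\<omega>. ennreal (g1 (\<omega>, t)) \<partial>M) = (\<integral>\<^sup>+\<omega>. ennreal (collar_payoff F C Q (gbm mu sig P W t \<omega>) * exp (- r * t)) \<partial>M)"
        using True unfolding g1_def gbm_def by (intro nn_integral_cong) simp
      also have "\<dots> = ennreal (Kf mu sig r Q F C P t)"
        by (rule E_payoff[OF BM sig F FC P Q]) (use True in simp)
      finally show ?thesis using True by (simp add: ein zero_ereal_def)
    next
      case False
      then have "t \<notin> {0..T}" "t \<notin> einterval 0 T" using elim by (auto simp: ein zero_ereal_def)
      then show ?thesis unfolding g1_def by simp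
    qed
  qed
  have A2: "AE t in lborel. (\<integral>\<^sup>+\<omega>. ennreal (g2 (\<omega>, t)) \<partial>M) = ennreal (indicator (einterval T \<infinity>) t * (P * Q * exp (- (r - mu) * t)))"
    using AE_lborel_singleton[of T]
  proof eventually_elim
    case (elim t)
    show ?case
    proof (cases "T < t")
      case True
      have "(\<integral>\<^sup>+\<omega>. ennreal (g2 (\<omega>, t)) \<partial>M) = (\<integral>\<^sup>+\<omega>. ennreal (gbm mu sig P W t \<omega> * Q * exp (- r * t)) \<partial>M)"
        using True T unfolding g2_def gbm_def by (intro nn_integral_cong) simp
      also have "\<dots> = ennreal (P * Q * exp (- (r - mu) * t))"
        by (rule E_gbm[OF BM sig P Q]) (use True T in simp)
      finally show ?thesis using True by (simp add: ein)
    next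
      case False
      then have "t \<notin> {T..}" "t \<notin> einterval T \<infinity>" using elim by (auto simp: ein)
      then show ?thesis unfolding g2_def by simp
    qed
  qed
  note ftc = FTC_part[OF sig rmu rpos F FC P Q T]
  define v1 where "v1 = V_CP mu sig r Q F C P - S_C mu sig r Q F C T P"
  define v2 where "v2 = P * Q / (r - mu) * exp (- (r - mu) * T)"
  have int1: "integrable lborel (\<lambda>t. indicator (einterval 0 T) t * Kf mu sig r Q F C P t)"
    using ftc(1) by (simp add: set_integrable_def)
  have nn1: "AE t in lborel. 0 \<le> indicator (einterval 0 T) t * Kf mu sig r Q F C P t"
    by (intro AE_I2) (auto simp: ein zero_ereal_def indicator_def intro!: Kf_nonneg[OF sig rmu rpos F FC P Q])
  have val1: "(\<integral>t. indicator (einterval 0 T) t * Kf mu sig r Q F C P t \<partial>lborel) = v1"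
    using ftc(2) T unfolding v1_def interval_lebesgue_integral_def set_lebesgue_integral_def
    by (simp add: zero_ereal_def)
  have K1: "(\<integral>\<^sup>+\<omega>. I1 \<omega> \<partial>M) = ennreal v1"
    unfolding F1 nn_integral_cong_AE[OF A1] nn_integral_eq_integral[OF int1 nn1] val1 ..
  have v1nn: "v1 \<ge> 0" unfolding val1[symmetric] by (rule integral_nonneg_AE[OF nn1])
  note ti = tail_int[OF rmu T P Q]
  have int2: "integrable lborel (\<lambda>t. indicator (einterval T \<infinity>) t * (P * Q * exp (- (r - mu) * t)))"
    using ti(1) by (simp add: set_integrable_def)
  have nn2: "AE t in lborel. 0 \<le> indicator (einterval T \<infinity>) t * (P * Q * exp (- (r - mu) * t))"
    using P Q by (intro AE_I2) (auto simp: indicator_def)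
  have val2: "(\<integral>t. indicator (einterval T \<infinity>) t * (P * Q * exp (- (r - mu) * t)) \<partial>lborel) = v2"
    using ti(2) unfolding v2_def interval_lebesgue_integral_def set_lebesgue_integral_def
    by simp
  have K2: "(\<integral>\<^sup>+\<omega>. I2 \<omega> \<partial>M) = ennreal v2"
    unfolding F2 nn_integral_cong_AE[OF A2] nn_integral_eq_integral[OF int2 nn2] val2 ..
  have v2nn: "v2 \<ge> 0" unfolding val2[symmetric] by (rule integral_nonneg_AE[OF nn2])
  note e1 = enn_int[OF I1m K1 v1nn] and e2 = enn_int[OF I2m K2 v2nn]
  have "V_C M W mu sig r Q T F C P = (\<integral>\<omega>. enn2real (I1 \<omega>) \<partial>M) + (\<integral>\<omega>. enn2real (I2 \<omega>) \<partial>M)"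
    unfolding VC by (rule Bochner_Integration.integral_add[OF e1(1) e2(1)])
  also have "\<dots> = v1 + v2" using e1(2) e2(2) by simp
  finally show ?thesis unfolding v1_def v2_def .
qed


end
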